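(* Let $n\ge3$, $\xi\in[0,1]$, and consider the star-to-complete network with adjacency matrix $\mathbf A^\xi$, $\theta_i=1$ for all $i$, and $F(p)=p$ on $[0,1]$. If the optimal value of problem (P4) (mixed-autonomy system) is strictly greater than the optimal value of (P4) with the additional constraint $z_i=0$ for all $i$ (human-only system), then an optimal solution of the mixed-autonomy problem (P4) satisfies $z_i>0$ for all $i=1,\dots,n$.
   Context: Star-to-complete network: for $n\ge3$ and $\xi\in[0,1]$, $\mathbf A^\xi=[\alpha_{ij}]$ is the $n\times n$ matrix with $\alpha_{ii}=0$ for all $i$, $\alpha_{1j}=\frac1{n-1}$ for $j\ne1$, $\alpha_{i1}=c_1:=\frac{\xi}{n-1}+(1-\xi)$ for $i\ne1$, and $\alpha_{ij}=c_2:=\frac{\xi}{n-1}$ for $i,j\ne1$, $i\ne j$. Parameters: $\beta\in(0,1)$, $\omega>0$, $s\ge0$. Problem (P4): maximize over $\{p_i,\delta_i,x_i,y_{ij},z_i,r_{ij}\}$ the objective $\sum_i p_i\theta_i(1-F(p_i))-\omega\sum_i\delta_i-s\sum_i z_i$ subject to, for all $i$: $d_i=\theta_i(1-F(p_i))$; $x_i=\beta\big[\sum_j\alpha_{ji}\min\{x_j,d_j\}+\sum_j y_{ji}\big]+\delta_i$; $\sum_j y_{ij}=\max\{x_i-d_i,0\}$; $z_i=\sum_j\alpha_{ji}\max\{d_j-x_j,0\}+\sum_j r_{ji}$; $\sum_j r_{ij}=z_i-\max\{d_i-x_i,0\}$; all variables nonnegative. *)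

theory Defs
  imports Complex_Main
begin

text \<open>Star-to-complete network on nodes 1..n (node 1 is the hub).\<close>
definition alpha :: "nat \<Rightarrow> real \<Rightarrow> nat \<Rightarrow> nat \<Rightarrow> real" where
  "alpha n \<xi> i j =
     (if i = j then 0
      else if i = 1 then 1 / (real n - 1)
      else if j = 1 then \<xi> / (real n - 1) + (1 - \<xi>)
      else \<xi> / (real n - 1))"

definition Funif :: "real \<Rightarrow> real" where
  "Funif p = max 0 (min 1 p)"

text \<open>Demand with theta_i = 1.\<close>
definition demand :: "real \<Rightarrow> real" where
  "demand p = 1 * (1 - Funif p)"

definition feasible_P4 ::
  "nat \<Rightarrow> real \<Rightarrow> real \<Rightarrow> (nat \<Rightarrow> real) \<Rightarrow> (nat \<Rightarrow> real) \<Rightarrow> (nat \<Rightarrow> real)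
     \<Rightarrow> (nat \<Rightarrow> nat \<Rightarrow> real) \<Rightarrow> (nat \<Rightarrow> real) \<Rightarrow> (nat \<Rightarrow> nat \<Rightarrow> real) \<Rightarrow> bool" where
  "feasible_P4 n \<xi> \<beta> p \<delta> x y z r \<longleftrightarrow>
     (\<forall>i\<in>{1..n}.
        x i = \<beta> * ((\<Sum>j\<in>{1..n}. alpha n \<xi> j i * min (x j) (demand (p j)))
                    + (\<Sum>j\<in>{1..n}. y j i)) + \<delta> i
      \<and> (\<Sum>j\<in>{1..n}. y i j) = max (x i - demand (p i)) 0
      \<and> z i = (\<Sum>j\<in>{1..n}. alpha n \<xi> j i * max (demand (p j) - x j) 0)
              + (\<Sum>j\<in>{1..n}. r j i)
      \<and> (\<Sum>j\<in>{1..n}. r i j) = z i - max (demand (p i) - x i) 0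
      \<and> p i \<ge> 0 \<and> \<delta> i \<ge> 0 \<and> x i \<ge> 0 \<and> z i \<ge> 0 \<and> demand (p i) \<ge> 0
      \<and> (\<forall>j\<in>{1..n}. y i j \<ge> 0 \<and> r i j \<ge> 0))"

definition obj_P4 ::
  "nat \<Rightarrow> real \<Rightarrow> real \<Rightarrow> (nat \<Rightarrow> real) \<Rightarrow> (nat \<Rightarrow> real) \<Rightarrow> (nat \<Rightarrow> real) \<Rightarrow> real" where
  "obj_P4 n \<omega> s p \<delta> z =
     (\<Sum>i\<in>{1..n}. p i * demand (p i)) - \<omega> * (\<Sum>i\<in>{1..n}. \<delta> i) - s * (\<Sum>i\<in>{1..n}. z i)"

definition optval_mixed :: "nat \<Rightarrow> real \<Rightarrow> real \<Rightarrow> real \<Rightarrow> real \<Rightarrow> real" where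
  "optval_mixed n \<xi> \<beta> \<omega> s =
     Sup {obj_P4 n \<omega> s p \<delta> z | p \<delta> x y z r. feasible_P4 n \<xi> \<beta> p \<delta> x y z r}"

definition optval_human :: "nat \<Rightarrow> real \<Rightarrow> real \<Rightarrow> real \<Rightarrow> real \<Rightarrow> real" where
  "optval_human n \<xi> \<beta> \<omega> s =
     Sup {obj_P4 n \<omega> s p \<delta> z | p \<delta> x y z r. feasible_P4 n \<xi> \<beta> p \<delta> x y z r
                                        \<and> (\<forall>i\<in>{1..n}. z i = 0)}"

definition optimal_P4 ::
  "nat \<Rightarrow> real \<Rightarrow> real \<Rightarrow> real \<Rightarrow> real \<Rightarrow> (nat \<Rightarrow> real) \<Rightarrow> (nat \<Rightarrow> real) \<Rightarrow> (nat \<Rightarrow> real)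
     \<Rightarrow> (nat \<Rightarrow> nat \<Rightarrow> real) \<Rightarrow> (nat \<Rightarrow> real) \<Rightarrow> (nat \<Rightarrow> nat \<Rightarrow> real) \<Rightarrow> bool" where
  "optimal_P4 n \<xi> \<beta> \<omega> s p \<delta> x y z r \<longleftrightarrow>
     feasible_P4 n \<xi> \<beta> p \<delta> x y z r \<and>
     (\<forall>p' \<delta>' x' y' z' r'. feasible_P4 n \<xi> \<beta> p' \<delta>' x' y' z' r' \<longrightarrow>
        obj_P4 n \<omega> s p' \<delta>' z' \<le> obj_P4 n \<omega> s p \<delta> z)"

end

theory Submission
  imports Defs
begin

definition inflow :: "nat \<Rightarrow> real \<Rightarrow> (nat \<Rightarrow> real) \<Rightarrow> nat \<Rightarrow> real" where
  "inflow n \<xi> v i = (\<Sum>j\<in>{1..n}. alpha n \<xi> j i * v j)"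

definition carc :: "nat \<Rightarrow> real \<Rightarrow> real \<Rightarrow> (nat \<Rightarrow> real) \<Rightarrow> real" where
  "carc n \<xi> \<beta> m = (\<Sum>i\<in>{1..n}. max (m i) (\<beta> * inflow n \<xi> m i))"

definition zc :: "nat \<Rightarrow> real \<Rightarrow> (nat \<Rightarrow> real) \<Rightarrow> real" where
  "zc n \<xi> u = (\<Sum>i\<in>{1..n}. max (u i) (inflow n \<xi> u i))"

definition Gv :: "nat \<Rightarrow> real \<Rightarrow> real \<Rightarrow> real \<Rightarrow> real \<Rightarrow> (nat \<Rightarrow> real) \<Rightarrow> (nat \<Rightarrow> real) \<Rightarrow> real" where
  "Gv n \<xi> \<beta> \<omega> s d m = (\<Sum>i\<in>{1..n}. d i * (1 - d i)) - \<omega> * (1 - \<beta>) * carc n \<xi> \<beta> m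
      - s * zc n \<xi> (\<lambda>i. d i - m i)"

definition ach :: "nat \<Rightarrow> real \<Rightarrow> real \<Rightarrow> (nat \<Rightarrow> real) \<Rightarrow> (nat \<Rightarrow> real) \<Rightarrow> bool" where
  "ach n \<xi> \<beta> d m \<longleftrightarrow> (\<forall>i\<in>{1..n}. 0 \<le> m i \<and> m i \<le> d i \<and> d i \<le> 1 \<and>
      (m i < d i \<longrightarrow> \<beta> * inflow n \<xi> m i \<le> m i))"

lemma alpha_nonneg:
  assumes "n \<ge> 2" "0 \<le> \<xi>" "\<xi> \<le> 1"
  shows "0 \<le> alpha n \<xi> i j"
proof -
  have "real n - 1 > 0" using assms by simp
  then show ?thesis using assms unfolding alpha_def by (auto intro: add_nonneg_nonneg)
qed

lemma set_1n: "(n::nat) \<ge> 1 \<Longrightarrow> {1..n} = insert 1 {2..n}"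
  by auto

lemma sum_1n:
  fixes f :: "nat \<Rightarrow> 'a::comm_monoid_add"
  assumes "(n::nat) \<ge> 1"
  shows "(\<Sum>i\<in>{1..n}. f i) = f 1 + (\<Sum>i\<in>{2..n}. f i)"
proof -
  have "(\<Sum>i\<in>{1..n}. f i) = (\<Sum>i\<in>insert 1 {2..n}. f i)" using set_1n[OF assms] by simp
  also have "\<dots> = f 1 + (\<Sum>i\<in>{2..n}. f i)" by (rule sum.insert) auto
  finally show ?thesis .
qed

lemma rowsum:
  assumes "n \<ge> 2" "j \<in> {1..n}"
  shows "(\<Sum>i\<in>{1..n}. alpha n \<xi> j i) = 1"
proof -
  have L: "real n - 1 > 0" using assms by simp
  have c: "card {2..n} = n - 1" by simp
  have rc: "real (n - 1) = real n - 1" using assms by (simp add: of_nat_diff)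
  show ?thesis
  proof (cases "j = 1")
    case True
    have "(\<Sum>i\<in>{1..n}. alpha n \<xi> j i) = alpha n \<xi> 1 1 + (\<Sum>i\<in>{2..n}. alpha n \<xi> 1 i)"
      using assms True sum_1n[of n "alpha n \<xi> 1"] by simp
    also have "(\<Sum>i\<in>{2..n}. alpha n \<xi> 1 i) = (\<Sum>i\<in>{2..n}. 1 / (real n - 1))"
      by (rule sum.cong) (auto simp: alpha_def)
    also have "\<dots> = 1" using L c rc by simp
    finally show ?thesis by (simp add: alpha_def)
  next
    case False
    then have j2: "j \<in> {2..n}" using assms by auto
    have "(\<Sum>i\<in>{1..n}. alpha n \<xi> j i) = alpha n \<xi> j 1 + (\<Sum>i\<in>{2..n}. alpha n \<xi> j i)"
      using assms sum_1n[of n "alpha n \<xi> j"] by simp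
    also have "(\<Sum>i\<in>{2..n}. alpha n \<xi> j i) = alpha n \<xi> j j + (\<Sum>i\<in>{2..n}-{j}. alpha n \<xi> j i)"
      using j2 by (simp add: sum.remove)
    also have "(\<Sum>i\<in>{2..n}-{j}. alpha n \<xi> j i) = (\<Sum>i\<in>{2..n}-{j}. \<xi> / (real n - 1))"
      by (rule sum.cong) (use False in \<open>auto simp: alpha_def\<close>)
    also have "\<dots> = real (n - 2) * (\<xi> / (real n - 1))"
      using j2 by (simp add: card_Diff_singleton)
    finally have "(\<Sum>i\<in>{1..n}. alpha n \<xi> j i) = \<xi> / (real n - 1) + (1 - \<xi>) + real (n - 2) * (\<xi> / (real n - 1))"
      using False by (simp add: alpha_def)
    also have "real (n - 2) = real n - 2" using assms by (simp add: of_nat_diff)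
    also have "\<xi> / (real n - 1) + (1 - \<xi>) + (real n - 2) * (\<xi> / (real n - 1)) = 1"
    proof -
      have "(real n - 2) * (\<xi> / (real n - 1)) = ((real n - 1) - 1) * (\<xi> / (real n - 1))" by simp
      also have "\<dots> = \<xi> - \<xi> / (real n - 1)" using L by (simp add: divide_simps) (simp add: algebra_simps)
      finally show ?thesis by simp
    qed
    finally show ?thesis .
  qed
qed

lemma sum_inflow:
  assumes "n \<ge> 2"
  shows "(\<Sum>i\<in>{1..n}. inflow n \<xi> v i) = (\<Sum>j\<in>{1..n}. v j)"
proof -
  have "(\<Sum>i\<in>{1..n}. inflow n \<xi> v i) = (\<Sum>j\<in>{1..n}. \<Sum>i\<in>{1..n}. alpha n \<xi> j i * v j)"
    unfolding inflow_def by (rule sum.swap)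
  also have "\<dots> = (\<Sum>j\<in>{1..n}. (\<Sum>i\<in>{1..n}. alpha n \<xi> j i) * v j)"
    by (simp add: sum_distrib_right)
  also have "\<dots> = (\<Sum>j\<in>{1..n}. v j)"
    using rowsum[OF assms] by simp
  finally show ?thesis .
qed

lemma inflow_nonneg:
  assumes "n \<ge> 2" "0 \<le> \<xi>" "\<xi> \<le> 1" "\<forall>j\<in>{1..n}. 0 \<le> v j"
  shows "0 \<le> inflow n \<xi> v i"
  unfolding inflow_def using assms alpha_nonneg[OF assms(1-3)]
  by (intro sum_nonneg) auto

lemma demand_range: "0 \<le> demand q" "demand q \<le> 1"
  unfolding demand_def Funif_def by auto

lemma rev_eq: "0 \<le> q \<Longrightarrow> q * demand q = demand q * (1 - demand q)"
  unfolding demand_def Funif_def by (cases "q \<le> 1") (auto simp: algebra_simps)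

lemma LB:
  assumes n2: "n \<ge> 2" and xi: "0 \<le> \<xi>" "\<xi> \<le> 1" and b: "0 < \<beta>" "\<beta> < 1"
    and om: "\<omega> > 0" and s0: "s \<ge> 0"
    and F: "feasible_P4 n \<xi> \<beta> p \<delta> x y z r"
  shows "obj_P4 n \<omega> s p \<delta> z \<le> Gv n \<xi> \<beta> \<omega> s (\<lambda>i. demand (p i)) (\<lambda>i. min (x i) (demand (p i)))"
    and "ach n \<xi> \<beta> (\<lambda>i. demand (p i)) (\<lambda>i. min (x i) (demand (p i)))"
    and "\<forall>i\<in>{1..n}. max (demand (p i) - min (x i) (demand (p i)))
            (inflow n \<xi> (\<lambda>j. demand (p j) - min (x j) (demand (p j))) i) \<le> z i"
proof -
  define d where "d = (\<lambda>i. demand (p i))"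
  define m where "m = (\<lambda>i. min (x i) (d i))"
  define u where "u = (\<lambda>i. d i - m i)"
  have Fi: "\<And>i. i \<in> {1..n} \<Longrightarrow>
        x i = \<beta> * ((\<Sum>j\<in>{1..n}. alpha n \<xi> j i * min (x j) (demand (p j))) + (\<Sum>j\<in>{1..n}. y j i)) + \<delta> i
      \<and> (\<Sum>j\<in>{1..n}. y i j) = max (x i - demand (p i)) 0
      \<and> z i = (\<Sum>j\<in>{1..n}. alpha n \<xi> j i * max (demand (p j) - x j) 0) + (\<Sum>j\<in>{1..n}. r j i)
      \<and> (\<Sum>j\<in>{1..n}. r i j) = z i - max (demand (p i) - x i) 0
      \<and> p i \<ge> 0 \<and> \<delta> i \<ge> 0 \<and> x i \<ge> 0 \<and> z i \<ge> 0 \<and> demand (p i) \<ge> 0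
      \<and> (\<forall>j\<in>{1..n}. y i j \<ge> 0 \<and> r i j \<ge> 0)"
    using bspec[OF F[unfolded feasible_P4_def]] by assumption
  have um: "\<And>j. max (demand (p j) - x j) 0 = u j" unfolding u_def m_def d_def by auto
  have x_eq: "x i = \<beta> * (inflow n \<xi> m i + (\<Sum>j\<in>{1..n}. y j i)) + \<delta> i" if i: "i \<in> {1..n}" for i
  proof -
    have "x i = \<beta> * ((\<Sum>j\<in>{1..n}. alpha n \<xi> j i * min (x j) (demand (p j))) + (\<Sum>j\<in>{1..n}. y j i)) + \<delta> i"
      using Fi[OF i] by (rule conjunct1)
    then show ?thesis unfolding inflow_def m_def d_def .
  qed
  have yrow: "(\<Sum>j\<in>{1..n}. y i j) = max (x i - d i) 0" if i: "i \<in> {1..n}" for i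
    using Fi[OF i] unfolding d_def by (elim conjE) assumption
  have pnn: "0 \<le> p i" if i: "i \<in> {1..n}" for i
    using Fi[OF i] by (elim conjE) assumption
  have zeq: "z i = inflow n \<xi> u i + (\<Sum>j\<in>{1..n}. r j i)" if i: "i \<in> {1..n}" for i
    using Fi[OF i] unfolding inflow_def um by (elim conjE) assumption
  have rrow: "(\<Sum>j\<in>{1..n}. r i j) = z i - u i" if i: "i \<in> {1..n}" for i
    using Fi[OF i] unfolding um by (elim conjE) assumption
  have d01: "\<And>i. 0 \<le> d i \<and> d i \<le> 1" unfolding d_def using demand_range by auto
  have m_nonneg: "0 \<le> m i" if i: "i \<in> {1..n}" for i
  proof -
    have "0 \<le> x i" using Fi[OF i] by simp
    then show ?thesis unfolding m_def using d01[of i] by simp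
  qed
  have ynn: "0 \<le> y i j" if "i \<in> {1..n}" "j \<in> {1..n}" for i j using Fi[OF that(1)] that(2) by simp
  have rnn: "0 \<le> r i j" if "i \<in> {1..n}" "j \<in> {1..n}" for i j using Fi[OF that(1)] that(2) by simp
  have x_ge: "\<And>i. i \<in> {1..n} \<Longrightarrow> max (m i) (\<beta> * inflow n \<xi> m i) \<le> x i"
  proof -
    fix i assume i: "i \<in> {1..n}"
    have "0 \<le> (\<Sum>j\<in>{1..n}. y j i)" using ynn i by (intro sum_nonneg) auto
    moreover have "0 \<le> \<delta> i" using Fi[OF i] by simp
    ultimately have "\<beta> * inflow n \<xi> m i \<le> x i" using x_eq[OF i] b
      by (smt (verit) mult_left_mono)
    moreover have "m i \<le> x i" unfolding m_def by simp
    ultimately show "?thesis i" by simp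
  qed
  have sumx: "(\<Sum>i\<in>{1..n}. x i) = \<beta> * (\<Sum>i\<in>{1..n}. x i) + (\<Sum>i\<in>{1..n}. \<delta> i)"
  proof -
    have "(\<Sum>i\<in>{1..n}. x i) = (\<Sum>i\<in>{1..n}. \<beta> * (inflow n \<xi> m i + (\<Sum>j\<in>{1..n}. y j i)) + \<delta> i)"
      using x_eq by (rule sum.cong[OF refl])
    also have "\<dots> = \<beta> * ((\<Sum>i\<in>{1..n}. inflow n \<xi> m i) + (\<Sum>i\<in>{1..n}. \<Sum>j\<in>{1..n}. y j i)) + (\<Sum>i\<in>{1..n}. \<delta> i)"
      by (simp add: sum.distrib sum_distrib_left[symmetric] distrib_left)
    also have "(\<Sum>i\<in>{1..n}. \<Sum>j\<in>{1..n}. y j i) = (\<Sum>j\<in>{1..n}. \<Sum>i\<in>{1..n}. y j i)"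
      by (rule sum.swap)
    also have "\<dots> = (\<Sum>j\<in>{1..n}. max (x j - d j) 0)"
      using yrow by (rule sum.cong[OF refl])
    also have "(\<Sum>i\<in>{1..n}. inflow n \<xi> m i) = (\<Sum>j\<in>{1..n}. m j)"
      using sum_inflow[OF n2] by blast
    also have "(\<Sum>j\<in>{1..n}. m j) + (\<Sum>j\<in>{1..n}. max (x j - d j) 0) = (\<Sum>j\<in>{1..n}. x j)"
      unfolding sum.distrib[symmetric] m_def by (intro sum.cong) auto
    finally show ?thesis .
  qed
  have sumdelta: "(\<Sum>i\<in>{1..n}. \<delta> i) = (1 - \<beta>) * (\<Sum>i\<in>{1..n}. x i)"
  proof -
    have "(\<Sum>i\<in>{1..n}. \<delta> i) = (\<Sum>i\<in>{1..n}. x i) - \<beta> * (\<Sum>i\<in>{1..n}. x i)"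
      using sumx by linarith
    then show ?thesis by (simp add: left_diff_distrib)
  qed
  have carc_le: "carc n \<xi> \<beta> m \<le> (\<Sum>i\<in>{1..n}. x i)"
    unfolding carc_def using x_ge by (intro sum_mono) auto
  have z_ge: "\<And>i. i \<in> {1..n} \<Longrightarrow> max (u i) (inflow n \<xi> u i) \<le> z i"
  proof -
    fix i assume i: "i \<in> {1..n}"
    have "0 \<le> (\<Sum>j\<in>{1..n}. r j i)" using rnn i by (intro sum_nonneg) auto
    then have "inflow n \<xi> u i \<le> z i" using zeq[OF i] by linarith
    moreover have "0 \<le> (\<Sum>j\<in>{1..n}. r i j)" using rnn i by (intro sum_nonneg) auto
    then have "u i \<le> z i" using rrow[OF i] by linarith
    ultimately show "?thesis i" by simp
  qed
  have zc_le: "zc n \<xi> u \<le> (\<Sum>i\<in>{1..n}. z i)"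
    unfolding zc_def using z_ge by (intro sum_mono) auto
  have rev: "(\<Sum>i\<in>{1..n}. p i * demand (p i)) = (\<Sum>i\<in>{1..n}. d i * (1 - d i))"
    unfolding d_def using pnn rev_eq by (intro sum.cong) auto
  have k0: "0 \<le> \<omega> * (1 - \<beta>)" using om b by simp
  have "obj_P4 n \<omega> s p \<delta> z = (\<Sum>i\<in>{1..n}. d i * (1 - d i)) - \<omega> * ((1 - \<beta>) * (\<Sum>i\<in>{1..n}. x i))
        - s * (\<Sum>i\<in>{1..n}. z i)"
    unfolding obj_P4_def rev sumdelta ..
  also have "\<dots> \<le> (\<Sum>i\<in>{1..n}. d i * (1 - d i)) - \<omega> * (1 - \<beta>) * carc n \<xi> \<beta> m - s * zc n \<xi> u"
  proof -
    have "\<omega> * (1 - \<beta>) * carc n \<xi> \<beta> m \<le> \<omega> * (1 - \<beta>) * (\<Sum>i\<in>{1..n}. x i)"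
      using carc_le k0 by (rule mult_left_mono)
    moreover have "s * zc n \<xi> u \<le> s * (\<Sum>i\<in>{1..n}. z i)"
      using zc_le s0 by (rule mult_left_mono)
    ultimately show ?thesis by (simp add: algebra_simps)
  qed
  finally have "obj_P4 n \<omega> s p \<delta> z \<le> Gv n \<xi> \<beta> \<omega> s d m"
    unfolding Gv_def u_def .
  then show "obj_P4 n \<omega> s p \<delta> z \<le> Gv n \<xi> \<beta> \<omega> s (\<lambda>i. demand (p i)) (\<lambda>i. min (x i) (demand (p i)))"
    unfolding m_def d_def .
  have "ach n \<xi> \<beta> d m"
    unfolding ach_def
  proof
    fix i assume i: "i \<in> {1..n}"
    have "m i < d i \<longrightarrow> \<beta> * inflow n \<xi> m i \<le> m i"
    proof
      assume "m i < d i"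
      then have "m i = x i" unfolding m_def by simp
      then show "\<beta> * inflow n \<xi> m i \<le> m i" using x_ge[OF i] by simp
    qed
    moreover have "m i \<le> d i" unfolding m_def by simp
    ultimately show "0 \<le> m i \<and> m i \<le> d i \<and> d i \<le> 1 \<and> (m i < d i \<longrightarrow> \<beta> * inflow n \<xi> m i \<le> m i)"
      using m_nonneg[OF i] d01[of i] by blast
  qed
  then show "ach n \<xi> \<beta> (\<lambda>i. demand (p i)) (\<lambda>i. min (x i) (demand (p i)))"
    unfolding m_def d_def .
  show "\<forall>i\<in>{1..n}. max (demand (p i) - min (x i) (demand (p i)))
            (inflow n \<xi> (\<lambda>j. demand (p j) - min (x j) (demand (p j))) i) \<le> z i"
    using z_ge unfolding u_def m_def d_def by auto
qed

lemma sum_zero_each: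
  fixes f :: "nat \<Rightarrow> real"
  assumes "finite A" "\<forall>i\<in>A. 0 \<le> f i" "sum f A = 0" "i \<in> A"
  shows "f i = 0"
  using assms sum_nonneg_eq_0_iff by blast

lemma transport_row:
  fixes a b :: "nat \<Rightarrow> real"
  assumes "finite A" "\<forall>j\<in>A. 0 \<le> b j" "\<forall>j\<in>A. 0 \<le> a j" "sum a A = sum b A" "i \<in> A"
  shows "(\<Sum>j\<in>A. a i * b j / sum a A) = a i"
    and "(\<Sum>j\<in>A. a j * b i / sum a A) = b i"
proof -
  show "(\<Sum>j\<in>A. a i * b j / sum a A) = a i"
  proof (cases "sum a A = 0")
    case True
    then have "a i = 0" using sum_zero_each[of A a i] assms by auto
    then show ?thesis by simp
  next
    case False
    have "(\<Sum>j\<in>A. a i * b j / sum a A) = a i * sum b A / sum a A"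
      by (simp add: sum_divide_distrib[symmetric] sum_distrib_left)
    then show ?thesis using False assms(4) by simp
  qed
  show "(\<Sum>j\<in>A. a j * b i / sum a A) = b i"
  proof (cases "sum a A = 0")
    case True
    then have "sum b A = 0" using assms(4) by simp
    then have "b i = 0" using sum_zero_each[of A b i] assms by auto
    then show ?thesis by simp
  next
    case False
    have "(\<Sum>j\<in>A. a j * b i / sum a A) = sum a A * b i / sum a A"
      by (simp add: sum_divide_distrib[symmetric] sum_distrib_right)
    then show ?thesis using False by simp
  qed
qed

lemma construct:
  assumes n2: "n \<ge> 2" and xi: "0 \<le> \<xi>" "\<xi> \<le> 1" and b: "0 < \<beta>" "\<beta> < 1"
    and A: "ach n \<xi> \<beta> d m"
  shows "\<exists>p \<delta> x y z r. feasible_P4 n \<xi> \<beta> p \<delta> x y z r \<and>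
           obj_P4 n \<omega> s p \<delta> z = Gv n \<xi> \<beta> \<omega> s d m \<and>
           (\<forall>i\<in>{1..n}. z i = max (d i - m i) (inflow n \<xi> (\<lambda>j. d j - m j) i))"
proof -
  define I where "I = {1..n}"
  have fI: "finite I" unfolding I_def by simp
  have Ai: "\<And>i. i \<in> I \<Longrightarrow> 0 \<le> m i \<and> m i \<le> d i \<and> d i \<le> 1 \<and> (m i < d i \<longrightarrow> \<beta> * inflow n \<xi> m i \<le> m i)"
    using A unfolding ach_def I_def by blast
  define im where "im = (\<lambda>i. inflow n \<xi> m i)"
  define g where "g = (\<lambda>i. max 0 (\<beta> * im i - m i))"
  define rm where "rm = (\<lambda>i. max 0 (m i - \<beta> * im i))"
  define N where "N = sum g I"
  define P where "P = sum rm I"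
  define x where "x = (\<lambda>i. m i + g i)"
  define y where "y = (\<lambda>i j. g i * rm j / P)"
  define \<delta> where "\<delta> = (\<lambda>i. x i - \<beta> * (im i + (\<Sum>j\<in>I. y j i)))"
  define u where "u = (\<lambda>i. d i - m i)"
  define iu where "iu = (\<lambda>i. inflow n \<xi> u i)"
  define a where "a = (\<lambda>i. max 0 (iu i - u i))"
  define bb where "bb = (\<lambda>i. max 0 (u i - iu i))"
  define T where "T = sum a I"
  define z where "z = (\<lambda>i. max (u i) (iu i))"
  define r where "r = (\<lambda>i j. a i * bb j / T)"
  define p where "p = (\<lambda>i. 1 - d i)"
  have mnn: "\<forall>j\<in>I. 0 \<le> m j" using Ai by blast
  have unn: "\<forall>j\<in>I. 0 \<le> u j" using Ai unfolding u_def by force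
  have gnn: "\<forall>j\<in>I. 0 \<le> g j" unfolding g_def by simp
  have rmnn: "\<forall>j\<in>I. 0 \<le> rm j" unfolding rm_def by simp
  have ann: "\<forall>j\<in>I. 0 \<le> a j" unfolding a_def by simp
  have bbnn: "\<forall>j\<in>I. 0 \<le> bb j" unfolding bb_def by simp
  have imnn: "\<forall>j\<in>I. 0 \<le> im j" unfolding im_def using inflow_nonneg[OF n2 xi] mnn unfolding I_def by blast
  have iunn: "\<forall>j\<in>I. 0 \<le> iu j" unfolding iu_def using inflow_nonneg[OF n2 xi] unn unfolding I_def by blast
  have PN: "P - N = (1 - \<beta>) * sum m I"
  proof -
    have "P - N = (\<Sum>i\<in>I. m i - \<beta> * im i)"
      unfolding P_def N_def sum_subtractf[symmetric] rm_def g_def by (intro sum.cong) auto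
    also have "\<dots> = sum m I - \<beta> * sum im I" by (simp add: sum_subtractf sum_distrib_left)
    also have "sum im I = sum m I" unfolding im_def I_def using sum_inflow[OF n2] by blast
    finally show ?thesis by (simp add: algebra_simps)
  qed
  have Nnn: "0 \<le> N" unfolding N_def using gnn by (intro sum_nonneg) auto
  have smnn: "0 \<le> sum m I" using mnn by (intro sum_nonneg) auto
  have NP: "N \<le> P" using PN b smnn by (smt (verit) mult_nonneg_nonneg)
  have yrow: "(\<Sum>j\<in>I. y i j) = g i" if i: "i \<in> I" for i
    unfolding y_def P_def using transport_row(1)[of I g rm i] fI rmnn gnn i
  proof (cases "P = 0")
    case True
    then have "N = 0" using NP Nnn by simp
    then have "g i = 0" using sum_zero_each[of I g i] fI gnn i unfolding N_def by auto
    then show "(\<Sum>j\<in>I. g i * rm j / sum rm I) = g i" by simp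
  next
    case False
    have "(\<Sum>j\<in>I. g i * rm j / sum rm I) = g i * sum rm I / sum rm I"
      by (simp add: sum_divide_distrib[symmetric] sum_distrib_left)
    then show "(\<Sum>j\<in>I. g i * rm j / sum rm I) = g i" using False unfolding P_def by simp
  qed
  have ycol: "(\<Sum>j\<in>I. y j i) = N * rm i / P" for i
    unfolding y_def N_def by (simp add: sum_divide_distrib[symmetric] sum_distrib_right)
  have dem: "demand (p i) = d i" if i: "i \<in> I" for i
    using Ai[OF i] unfolding demand_def Funif_def p_def by auto
  have minx: "min (x i) (d i) = m i" and exc: "max (x i - d i) 0 = g i" and unm: "max (d i - x i) 0 = u i"
    if i: "i \<in> I" for i
  proof -
    have "min (x i) (d i) = m i \<and> max (x i - d i) 0 = g i \<and> max (d i - x i) 0 = u i"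
    proof (cases "\<beta> * im i - m i > 0")
      case True
      then have "\<not> m i < d i" using Ai[OF i] unfolding im_def by auto
      then have "m i = d i" using Ai[OF i] by simp
      then show ?thesis using True unfolding x_def g_def u_def by auto
    next
      case False
      then have "g i = 0" unfolding g_def by simp
      then show ?thesis using Ai[OF i] unfolding x_def u_def by auto
    qed
    then show "min (x i) (d i) = m i" "max (x i - d i) 0 = g i" "max (d i - x i) 0 = u i" by auto
  qed
  have rm_eq: "x i - \<beta> * im i = rm i" for i
    unfolding x_def g_def rm_def by auto
  have deltann: "0 \<le> \<delta> i" if i: "i \<in> I" for i
  proof (cases "P = 0")
    case True
    then have "rm i = 0" using sum_zero_each[of I rm i] fI rmnn i unfolding P_def by auto
    then show ?thesis unfolding \<delta>_def using ycol[of i] True rm_eq[of i] by (simp add: algebra_simps)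
  next
    case False
    then have Pp: "P > 0" using NP Nnn by simp
    have "\<beta> * N \<le> P" using NP Nnn b by (smt (verit) mult_left_le_one_le)
    then have "\<beta> * N / P \<le> 1" using Pp by simp
    have "\<delta> i = rm i - \<beta> * (N * rm i / P)" unfolding \<delta>_def using ycol[of i] rm_eq[of i] by (simp add: algebra_simps)
    also have "\<dots> = rm i * (1 - \<beta> * N / P)" by (simp add: algebra_simps)
    finally show ?thesis using \<open>\<beta> * N / P \<le> 1\<close> rmnn i by simp
  qed
  have sumdelta: "(\<Sum>i\<in>I. \<delta> i) = (1 - \<beta>) * carc n \<xi> \<beta> m"
  proof -
    have carc: "carc n \<xi> \<beta> m = sum m I + N"
    proof -
      have "carc n \<xi> \<beta> m = (\<Sum>i\<in>I. m i + g i)"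
        unfolding carc_def I_def[symmetric] im_def[symmetric] g_def by (intro sum.cong) auto
      then show ?thesis unfolding N_def by (simp add: sum.distrib)
    qed
    have sx: "(\<Sum>i\<in>I. x i) = sum m I + N" unfolding x_def N_def by (simp add: sum.distrib)
    have scol: "(\<Sum>i\<in>I. \<Sum>j\<in>I. y j i) = N"
    proof -
      have "(\<Sum>i\<in>I. \<Sum>j\<in>I. y j i) = (\<Sum>j\<in>I. \<Sum>i\<in>I. y j i)" by (rule sum.swap)
      also have "\<dots> = N" unfolding N_def using yrow by simp
      finally show ?thesis .
    qed
    have "(\<Sum>i\<in>I. \<delta> i) = (\<Sum>i\<in>I. x i) - \<beta> * ((\<Sum>i\<in>I. im i) + (\<Sum>i\<in>I. \<Sum>j\<in>I. y j i))"
      unfolding \<delta>_def by (simp add: sum_subtractf sum.distrib sum_distrib_left distrib_left)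
    also have "(\<Sum>i\<in>I. im i) = sum m I" unfolding im_def I_def using sum_inflow[OF n2] by blast
    finally show ?thesis unfolding sx scol carc by (simp add: algebra_simps)
  qed
  have zcol: "(\<Sum>j\<in>I. r j i) = bb i" and zrow: "(\<Sum>j\<in>I. r i j) = a i" if i: "i \<in> I" for i
  proof -
    have Tab: "sum a I = sum bb I"
    proof -
      have "sum a I - sum bb I = (\<Sum>i\<in>I. iu i - u i)"
        unfolding sum_subtractf[symmetric] a_def bb_def by (intro sum.cong) auto
      also have "\<dots> = sum iu I - sum u I" by (simp add: sum_subtractf)
      also have "sum iu I = sum u I" unfolding iu_def I_def using sum_inflow[OF n2] by blast
      finally show ?thesis by simp
    qed
    show "(\<Sum>j\<in>I. r j i) = bb i" unfolding r_def T_def using transport_row(2)[OF fI bbnn ann Tab i] .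
    show "(\<Sum>j\<in>I. r i j) = a i" unfolding r_def T_def using transport_row(1)[OF fI bbnn ann Tab i] .
  qed
  have F: "feasible_P4 n \<xi> \<beta> p \<delta> x y z r"
    unfolding feasible_P4_def I_def[symmetric]
  proof
    fix i assume i: "i \<in> I"
    have s1: "(\<Sum>j\<in>I. alpha n \<xi> j i * min (x j) (demand (p j))) = im i"
      unfolding im_def inflow_def I_def[symmetric] using minx dem by (intro sum.cong) auto
    have s2: "(\<Sum>j\<in>I. alpha n \<xi> j i * max (demand (p j) - x j) 0) = iu i"
      unfolding iu_def inflow_def I_def[symmetric] using unm dem by (intro sum.cong) auto
    have xe: "x i = \<beta> * ((\<Sum>j\<in>I. alpha n \<xi> j i * min (x j) (demand (p j))) + (\<Sum>j\<in>I. y j i)) + \<delta> i"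
      unfolding s1 \<delta>_def by simp
    have ye: "(\<Sum>j\<in>I. y i j) = max (x i - demand (p i)) 0" using yrow[OF i] exc[OF i] dem[OF i] by simp
    have ze: "z i = (\<Sum>j\<in>I. alpha n \<xi> j i * max (demand (p j) - x j) 0) + (\<Sum>j\<in>I. r j i)"
      unfolding s2 zcol[OF i] z_def bb_def by auto
    have re: "(\<Sum>j\<in>I. r i j) = z i - max (demand (p i) - x i) 0"
      unfolding zrow[OF i] dem[OF i] unm[OF i] z_def a_def by auto
    have nn: "p i \<ge> 0 \<and> \<delta> i \<ge> 0 \<and> x i \<ge> 0 \<and> z i \<ge> 0 \<and> demand (p i) \<ge> 0"
      using Ai[OF i] deltann[OF i] gnn i unn dem[OF i] unfolding p_def x_def z_def by force
    have yr: "\<forall>j\<in>I. y i j \<ge> 0 \<and> r i j \<ge> 0"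
      unfolding y_def r_def T_def P_def using gnn rmnn ann bbnn i fI
      by (auto intro!: divide_nonneg_nonneg mult_nonneg_nonneg sum_nonneg)
    show "x i = \<beta> * ((\<Sum>j\<in>I. alpha n \<xi> j i * min (x j) (demand (p j))) + (\<Sum>j\<in>I. y j i)) + \<delta> i \<and>
         (\<Sum>j\<in>I. y i j) = max (x i - demand (p i)) 0 \<and>
         z i = (\<Sum>j\<in>I. alpha n \<xi> j i * max (demand (p j) - x j) 0) + (\<Sum>j\<in>I. r j i) \<and>
         (\<Sum>j\<in>I. r i j) = z i - max (demand (p i) - x i) 0 \<and>
         0 \<le> p i \<and> 0 \<le> \<delta> i \<and> 0 \<le> x i \<and> 0 \<le> z i \<and> 0 \<le> demand (p i) \<and>
         (\<forall>j\<in>I. 0 \<le> y i j \<and> 0 \<le> r i j)"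
      using xe ye ze re nn yr by blast
  qed
  have obj: "obj_P4 n \<omega> s p \<delta> z = Gv n \<xi> \<beta> \<omega> s d m"
  proof -
    have "(\<Sum>i\<in>I. p i * demand (p i)) = (\<Sum>i\<in>I. d i * (1 - d i))"
      using dem unfolding p_def by (intro sum.cong) auto
    moreover have "(\<Sum>i\<in>I. z i) = zc n \<xi> u"
      unfolding zc_def z_def iu_def I_def ..
    ultimately show ?thesis
      unfolding obj_P4_def Gv_def I_def[symmetric] sumdelta u_def[symmetric] by simp
  qed
  show ?thesis
    using F obj unfolding z_def u_def iu_def I_def by blast
qed

lemma inflow_star1:
  assumes "n \<ge> 2"
  shows "inflow n 0 v 1 = (\<Sum>l\<in>{2..n}. v l)"
proof -
  have "inflow n 0 v 1 = alpha n 0 1 1 * v 1 + (\<Sum>l\<in>{2..n}. alpha n 0 l 1 * v l)"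
    unfolding inflow_def using assms sum_1n[of n "\<lambda>j. alpha n 0 j 1 * v j"] by simp
  also have "(\<Sum>l\<in>{2..n}. alpha n 0 l 1 * v l) = (\<Sum>l\<in>{2..n}. v l)"
    by (rule sum.cong) (auto simp: alpha_def)
  finally show ?thesis by (simp add: alpha_def)
qed

lemma inflow_starl:
  assumes "n \<ge> 2" "l \<in> {2..n}"
  shows "inflow n 0 v l = v 1 / (real n - 1)"
proof -
  have "inflow n 0 v l = alpha n 0 1 l * v 1 + (\<Sum>j\<in>{2..n}. alpha n 0 j l * v j)"
    unfolding inflow_def using assms sum_1n[of n "\<lambda>j. alpha n 0 j l * v j"] by simp
  also have "(\<Sum>j\<in>{2..n}. alpha n 0 j l * v j) = 0"
    by (rule sum.neutral) (use assms in \<open>auto simp: alpha_def\<close>)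
  finally show ?thesis using assms by (auto simp: alpha_def)
qed

lemma carc_star:
  assumes "n \<ge> 2"
  shows "carc n 0 \<beta> m = max (m 1) (\<beta> * (\<Sum>l\<in>{2..n}. m l)) + (\<Sum>l\<in>{2..n}. max (m l) (\<beta> * (m 1 / (real n - 1))))"
proof -
  have "carc n 0 \<beta> m = max (m 1) (\<beta> * inflow n 0 m 1) + (\<Sum>l\<in>{2..n}. max (m l) (\<beta> * inflow n 0 m l))"
    unfolding carc_def using assms sum_1n[of n "\<lambda>i. max (m i) (\<beta> * inflow n 0 m i)"] by simp
  also have "(\<Sum>l\<in>{2..n}. max (m l) (\<beta> * inflow n 0 m l)) = (\<Sum>l\<in>{2..n}. max (m l) (\<beta> * (m 1 / (real n - 1))))"
    using inflow_starl[OF assms] by (intro sum.cong) auto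
  finally show ?thesis using inflow_star1[OF assms] by simp
qed

lemma zc_star:
  assumes "n \<ge> 2"
  shows "zc n 0 u = max (u 1) (\<Sum>l\<in>{2..n}. u l) + (\<Sum>l\<in>{2..n}. max (u l) (u 1 / (real n - 1)))"
proof -
  have "zc n 0 u = max (u 1) (inflow n 0 u 1) + (\<Sum>l\<in>{2..n}. max (u l) (inflow n 0 u l))"
    unfolding zc_def using assms sum_1n[of n "\<lambda>i. max (u i) (inflow n 0 u i)"] by simp
  also have "(\<Sum>l\<in>{2..n}. max (u l) (inflow n 0 u l)) = (\<Sum>l\<in>{2..n}. max (u l) (u 1 / (real n - 1)))"
    using inflow_starl[OF assms] by (intro sum.cong) auto
  finally show ?thesis using inflow_star1[OF assms] by simp
qed

lemma ach_star:
  assumes "n \<ge> 2"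
  shows "ach n 0 \<beta> d m \<longleftrightarrow> (\<forall>i\<in>{1..n}. 0 \<le> m i \<and> m i \<le> d i \<and> d i \<le> 1)
     \<and> (m 1 < d 1 \<longrightarrow> \<beta> * (\<Sum>l\<in>{2..n}. m l) \<le> m 1)
     \<and> (\<forall>l\<in>{2..n}. m l < d l \<longrightarrow> \<beta> * (m 1 / (real n - 1)) \<le> m l)"
proof -
  have one: "1 \<in> {1..n}" using assms by simp
  have sub: "{2..n} \<subseteq> {1..n}" by auto
  show ?thesis
    unfolding ach_def
    using inflow_star1[OF assms, of m] inflow_starl[OF assms, of _ m] one sub set_1n[of n] assms
    by (auto simp del: One_nat_def)  
qed

lemma Gv_star:
  assumes "n \<ge> 2"
  shows "Gv n 0 \<beta> \<omega> s d m = (d 1 * (1 - d 1) + (\<Sum>l\<in>{2..n}. d l * (1 - d l)))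
     - \<omega> * (1 - \<beta>) * (max (m 1) (\<beta> * (\<Sum>l\<in>{2..n}. m l)) + (\<Sum>l\<in>{2..n}. max (m l) (\<beta> * (m 1 / (real n - 1)))))
     - s * (max (d 1 - m 1) (\<Sum>l\<in>{2..n}. d l - m l) + (\<Sum>l\<in>{2..n}. max (d l - m l) ((d 1 - m 1) / (real n - 1))))"
  unfolding Gv_def carc_star[OF assms] zc_star[OF assms] using sum_1n[of n "\<lambda>i. d i * (1 - d i)"] assms
  by simp

lemma sum_if_one:
  fixes b :: "nat \<Rightarrow> real"
  assumes "finite A" "j \<in> A"
  shows "(\<Sum>l\<in>A. if l = j then c else b l) = sum b A - b j + c"
proof -
  have "(\<Sum>l\<in>A. if l = j then c else b l) = c + (\<Sum>l\<in>A-{j}. if l = j then c else b l)"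
    using assms by (simp add: sum.remove)
  also have "(\<Sum>l\<in>A-{j}. if l = j then c else b l) = (\<Sum>l\<in>A-{j}. b l)" by (rule sum.cong) auto
  also have "\<dots> = sum b A - b j" using assms by (simp add: sum_diff1)
  finally show ?thesis by simp
qed

lemma eps_le:
  fixes c a :: real
  assumes "0 < a" "\<And>e. 0 < e \<Longrightarrow> e \<le> a \<Longrightarrow> c \<le> e"
  shows "c \<le> 0"
proof (rule ccontr)
  assume "\<not> c \<le> 0"
  then have "0 < min a (c/2)" using assms by simp
  then have "c \<le> min a (c/2)" using assms(2)[of "min a (c/2)"] by simp
  then show False using \<open>\<not> c \<le> 0\<close> by linarith
qed

lemma Gv_hub0:
  assumes "n \<ge> 2" "d 1 = m 1" "\<forall>l\<in>{2..n}. m l \<le> d l"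
  shows "Gv n 0 \<beta> \<omega> s d m = (d 1 * (1 - d 1) + (\<Sum>l\<in>{2..n}. d l * (1 - d l)))
     - \<omega> * (1 - \<beta>) * (max (m 1) (\<beta> * (\<Sum>l\<in>{2..n}. m l)) + (\<Sum>l\<in>{2..n}. max (m l) (\<beta> * (m 1 / (real n - 1)))))
     - s * (2 * (\<Sum>l\<in>{2..n}. d l - m l))"
proof -
  have W0: "0 \<le> (\<Sum>l\<in>{2..n}. d l - m l)" using assms(3) by (intro sum_nonneg) auto
  have "(\<Sum>l\<in>{2..n}. max (d l - m l) ((d 1 - m 1) / (real n - 1))) = (\<Sum>l\<in>{2..n}. d l - m l)"
    using assms(2,3) by (intro sum.cong) auto
  then show ?thesis unfolding Gv_star[OF assms(1)] using assms(2) W0 by simp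
qed

context
  fixes n :: nat and \<beta> \<omega> s :: real and d m :: "nat \<Rightarrow> real"
  assumes n3: "n \<ge> 3" and b0: "0 < \<beta>" and b1: "\<beta> < 1" and om: "0 < \<omega>" and s0: "0 \<le> s"
    and sk: "s < \<omega> * (1 - \<beta>)" and s2: "2 * s < \<omega> * (1 - \<beta>) * (1 + \<beta>)"
    and Aopt: "ach n 0 \<beta> d m"
    and opt: "\<And>d' m'. ach n 0 \<beta> d' m' \<Longrightarrow> Gv n 0 \<beta> \<omega> s d' m' \<le> Gv n 0 \<beta> \<omega> s d m"
    and hub: "m 1 = d 1" and Jex: "\<exists>j\<in>{2..n}. m j < d j"
begin

lemma n2: "n \<ge> 2" using n3 by simp

lemma F1: "i \<in> {1..n} \<Longrightarrow> 0 \<le> m i \<and> m i \<le> d i \<and> d i \<le> 1"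
  using Aopt unfolding ach_star[OF n2] by blast

lemma F1h: "0 \<le> m 1 \<and> m 1 \<le> d 1 \<and> d 1 \<le> 1"
  using F1[of 1] n2 by simp

lemma F1l: "l \<in> {2..n} \<Longrightarrow> 0 \<le> m l \<and> m l \<le> d l \<and> d l \<le> 1"
  using F1 by auto

lemma F2: "l \<in> {2..n} \<Longrightarrow> m l < d l \<Longrightarrow> \<beta> * (d 1 / (real n - 1)) \<le> m l"
  using Aopt hub unfolding ach_star[OF n2] by auto

lemma Lpos: "real n - 1 \<ge> 2" using n3 by simp

lemma cardL: "real (card {2..n}) = real n - 1" using n3 by (simp add: of_nat_diff)

lemma Gcur: "Gv n 0 \<beta> \<omega> s d m = (d 1 * (1 - d 1) + (\<Sum>l\<in>{2..n}. d l * (1 - d l)))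
     - \<omega> * (1 - \<beta>) * (max (d 1) (\<beta> * (\<Sum>l\<in>{2..n}. m l)) + (\<Sum>l\<in>{2..n}. max (m l) (\<beta> * (d 1 / (real n - 1)))))
     - s * (2 * (\<Sum>l\<in>{2..n}. d l - m l))"
  using Gv_hub0[OF n2, of d m \<beta> \<omega> s] hub F1l by simp

lemma kktJ:
  assumes j: "j \<in> {2..n}" "m j < d j"
  shows "2 * s \<le> 1 - 2 * d j"
proof -
  have key: "2 * s - (1 - 2 * d j) \<le> e" if e: "0 < e" "e \<le> (d j - m j) / 2" for e
  proof -
    define d' where "d' = (\<lambda>i. if i = j then d j - e else d i)"
    have j1: "j \<noteq> 1" using j by auto
    have d'1: "d' 1 = d 1" unfolding d'_def using j1 by simp
    have A': "ach n 0 \<beta> d' m"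
      unfolding ach_star[OF n2]
    proof (intro conjI)
      show "\<forall>i\<in>{1..n}. 0 \<le> m i \<and> m i \<le> d' i \<and> d' i \<le> 1"
        using F1 F1l[OF j(1)] e unfolding d'_def by auto
      show "m 1 < d' 1 \<longrightarrow> \<beta> * (\<Sum>l\<in>{2..n}. m l) \<le> m 1" using d'1 hub by simp
      show "\<forall>l\<in>{2..n}. m l < d' l \<longrightarrow> \<beta> * (m 1 / (real n - 1)) \<le> m l"
        using F2 hub j e unfolding d'_def by auto
    qed
    have le: "Gv n 0 \<beta> \<omega> s d' m \<le> Gv n 0 \<beta> \<omega> s d m" using opt[OF A'] .
    have leaves: "\<forall>l\<in>{2..n}. m l \<le> d' l" using F1l e unfolding d'_def by auto
    have G': "Gv n 0 \<beta> \<omega> s d' m = (d 1 * (1 - d 1) + (\<Sum>l\<in>{2..n}. d' l * (1 - d' l)))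
     - \<omega> * (1 - \<beta>) * (max (d 1) (\<beta> * (\<Sum>l\<in>{2..n}. m l)) + (\<Sum>l\<in>{2..n}. max (m l) (\<beta> * (d 1 / (real n - 1)))))
     - s * (2 * (\<Sum>l\<in>{2..n}. d' l - m l))"
      using Gv_hub0[OF n2, of d' m \<beta> \<omega> s] d'1 hub leaves by simp
    have r1: "(\<Sum>l\<in>{2..n}. d' l * (1 - d' l)) = (\<Sum>l\<in>{2..n}. d l * (1 - d l)) - d j * (1 - d j) + (d j - e) * (1 - (d j - e))"
    proof -
      have "(\<Sum>l\<in>{2..n}. d' l * (1 - d' l)) = (\<Sum>l\<in>{2..n}. if l = j then (d j - e) * (1 - (d j - e)) else d l * (1 - d l))"
        unfolding d'_def by (intro sum.cong) auto
      then show ?thesis using sum_if_one[of "{2..n}" j] j by simp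
    qed
    have r2: "(\<Sum>l\<in>{2..n}. d' l - m l) = (\<Sum>l\<in>{2..n}. d l - m l) - e"
    proof -
      have "(\<Sum>l\<in>{2..n}. d' l - m l) = (\<Sum>l\<in>{2..n}. if l = j then d j - e - m j else d l - m l)"
        unfolding d'_def by (intro sum.cong) auto
      then show ?thesis using sum_if_one[of "{2..n}" j] j by simp
    qed
    have "(d j - e) * (1 - (d j - e)) - d j * (1 - d j) + 2 * s * e \<le> 0"
      using le unfolding G' Gcur r1 r2 by (simp add: algebra_simps)
    then have "e * (2 * s - (1 - 2 * d j) - e) \<le> 0" by (simp add: algebra_simps)
    then have "2 * s - (1 - 2 * d j) - e \<le> 0" using e(1) by (simp add: mult_le_0_iff)
    then show ?thesis by simp
  qed
  have "2 * s - (1 - 2 * d j) \<le> 0"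
    by (rule eps_le[of "(d j - m j) / 2"]) (use j key in auto)
  then show ?thesis by simp
qed


lemma j0ex: obtains j0 where "j0 \<in> {2..n}" "m j0 < d j0" using Jex by blast

lemma s_half: "2 * s < 1"
proof -
  obtain j0 where j0: "j0 \<in> {2..n}" "m j0 < d j0" using j0ex .
  have "0 < d j0" using F1l[OF j0(1)] j0(2) by linarith
  then show ?thesis using kktJ[OF j0] by linarith
qed

lemma hubA:
  assumes bm: "\<beta> * (\<Sum>l\<in>{2..n}. m l) \<le> d 1" and d1: "d 1 < 1"
  shows "1 - 2 * d 1 \<le> s * (real n - 2) / (real n - 1)"
proof -
  obtain j0 where j0: "j0 \<in> {2..n}" "m j0 < d j0" using j0ex .
  have j01: "j0 \<noteq> 1" using j0 by auto
  define W where "W = (\<Sum>l\<in>{2..n}. d l - m l)"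
  have Lp: "real n - 1 > 0" using Lpos by simp
  have uj0W: "d j0 - m j0 \<le> W"
    unfolding W_def using F1l j0(1) by (intro member_le_sum) auto
  have key: "1 - 2 * d 1 - s * (real n - 2) / (real n - 1) \<le> e"
    if e: "0 < e" "e \<le> min (d j0 - m j0) (1 - d 1)" for e
  proof -
    define d' where "d' = (\<lambda>i. if i = 1 then d 1 + e else d i)"
    have d'1: "d' 1 = d 1 + e" unfolding d'_def by simp
    have d'l: "\<And>l. l \<in> {2..n} \<Longrightarrow> d' l = d l" unfolding d'_def by auto
    have A': "ach n 0 \<beta> d' m"
      unfolding ach_star[OF n2]
    proof (intro conjI)
      show "\<forall>i\<in>{1..n}. 0 \<le> m i \<and> m i \<le> d' i \<and> d' i \<le> 1"
        using F1 F1h e unfolding d'_def by auto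
      show "m 1 < d' 1 \<longrightarrow> \<beta> * (\<Sum>l\<in>{2..n}. m l) \<le> m 1" using bm hub by simp
      show "\<forall>l\<in>{2..n}. m l < d' l \<longrightarrow> \<beta> * (m 1 / (real n - 1)) \<le> m l"
        using F2 hub d'l by auto
    qed
    have le: "Gv n 0 \<beta> \<omega> s d' m \<le> Gv n 0 \<beta> \<omega> s d m" using opt[OF A'] .
    have zl: "(\<Sum>l\<in>{2..n}. max (d' l - m l) ((d' 1 - m 1) / (real n - 1)))
        \<le> W + (real n - 2) * (e / (real n - 1))"
    proof -
      have "(\<Sum>l\<in>{2..n}. max (d' l - m l) ((d' 1 - m 1) / (real n - 1)))
          \<le> (\<Sum>l\<in>{2..n}. (d l - m l) + (if l = j0 then 0 else e / (real n - 1)))"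
      proof (rule sum_mono)
        fix l assume l: "l \<in> {2..n}"
        have u0: "0 \<le> d l - m l" using F1l[OF l] by simp
        have "e / (real n - 1) \<le> e" using e Lpos by (simp add: divide_le_eq)
        moreover have "0 \<le> e / (real n - 1)" using e Lp by simp
        ultimately show "max (d' l - m l) ((d' 1 - m 1) / (real n - 1)) \<le> (d l - m l) + (if l = j0 then 0 else e / (real n - 1))"
          using u0 d'l[OF l] d'1 hub e by auto
      qed
      also have "\<dots> = W + (\<Sum>l\<in>{2..n}. if l = j0 then 0 else e / (real n - 1))"
        unfolding W_def by (simp add: sum.distrib)
      also have "(\<Sum>l\<in>{2..n}. if l = j0 then 0 else e / (real n - 1)) = real (card {2..n}) * (e / (real n - 1)) - e / (real n - 1)"
        using sum_if_one[of "{2..n}" j0 0 "\<lambda>_. e / (real n - 1)"] j0(1) by simp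
      also have "real (card {2..n}) * (e / (real n - 1)) - e / (real n - 1) = (real n - 2) * (e / (real n - 1))"
        unfolding cardL by (simp add: algebra_simps add_divide_distrib[symmetric])
      finally show ?thesis .
    qed
    have zh: "max e (\<Sum>l\<in>{2..n}. d' l - m l) = W"
    proof -
      have "(\<Sum>l\<in>{2..n}. d' l - m l) = W" unfolding W_def using d'l by (intro sum.cong) auto
      moreover have "e \<le> W" using e uj0W by simp
      ultimately show ?thesis by simp
    qed
    have revl: "(\<Sum>l\<in>{2..n}. d' l * (1 - d' l)) = (\<Sum>l\<in>{2..n}. d l * (1 - d l))"
      using d'l by (intro sum.cong) auto
    have G': "Gv n 0 \<beta> \<omega> s d' m = ((d 1 + e) * (1 - (d 1 + e)) + (\<Sum>l\<in>{2..n}. d l * (1 - d l)))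
     - \<omega> * (1 - \<beta>) * (max (d 1) (\<beta> * (\<Sum>l\<in>{2..n}. m l)) + (\<Sum>l\<in>{2..n}. max (m l) (\<beta> * (d 1 / (real n - 1)))))
     - s * (W + (\<Sum>l\<in>{2..n}. max (d' l - m l) ((d' 1 - m 1) / (real n - 1))))"
      unfolding Gv_star[OF n2] revl d'1 hub by (simp add: zh)
    have "s * (\<Sum>l\<in>{2..n}. max (d' l - m l) ((d' 1 - m 1) / (real n - 1))) \<le> s * (W + (real n - 2) * (e / (real n - 1)))"
      using zl s0 by (rule mult_left_mono)
    then have "(d 1 + e) * (1 - (d 1 + e)) - d 1 * (1 - d 1) - s * ((real n - 2) * (e / (real n - 1))) \<le> 0"
      using le unfolding G' Gcur W_def by (simp add: algebra_simps)
    then have "e * (1 - 2 * d 1 - s * (real n - 2) / (real n - 1) - e) \<le> 0"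
      by (simp add: algebra_simps)
    then have "1 - 2 * d 1 - s * (real n - 2) / (real n - 1) - e \<le> 0" using e(1) by (simp add: mult_le_0_iff)
    then show ?thesis by simp
  qed
  have "1 - 2 * d 1 - s * (real n - 2) / (real n - 1) \<le> 0"
    by (rule eps_le[of "min (d j0 - m j0) (1 - d 1)"]) (use j0 d1 key in auto)
  then show ?thesis by simp
qed

lemma hubB:
  assumes bm: "\<beta> * (\<Sum>l\<in>{2..n}. m l) < d 1"
  shows "\<omega> * (1 - \<beta>) \<le> 1 - 2 * d 1"
proof -
  define M where "M = (\<Sum>l\<in>{2..n}. m l)"
  have key: "\<omega> * (1 - \<beta>) - (1 - 2 * d 1) \<le> e" if e: "0 < e" "e \<le> d 1 - \<beta> * M" for e
  proof -
    define d' where "d' = (\<lambda>i. if i = 1 then d 1 - e else d i)"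
    define m' where "m' = (\<lambda>i. if i = 1 then d 1 - e else m i)"
    have d'l: "\<And>l. l \<in> {2..n} \<Longrightarrow> d' l = d l" unfolding d'_def by auto
    have m'l: "\<And>l. l \<in> {2..n} \<Longrightarrow> m' l = m l" unfolding m'_def by auto
    have M0: "0 \<le> M" unfolding M_def using F1l by (intro sum_nonneg) auto
    have bM0: "0 \<le> \<beta> * M" using M0 b0 by simp
    have sm': "(\<Sum>l\<in>{2..n}. m' l) = M" unfolding M_def using m'l by (intro sum.cong) auto
    have A': "ach n 0 \<beta> d' m'"
      unfolding ach_star[OF n2]
    proof (intro conjI)
      show "\<forall>i\<in>{1..n}. 0 \<le> m' i \<and> m' i \<le> d' i \<and> d' i \<le> 1"
        using F1 F1h e bM0 unfolding d'_def m'_def by auto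
      show "m' 1 < d' 1 \<longrightarrow> \<beta> * (\<Sum>l\<in>{2..n}. m' l) \<le> m' 1" unfolding d'_def m'_def by simp
      show "\<forall>l\<in>{2..n}. m' l < d' l \<longrightarrow> \<beta> * (m' 1 / (real n - 1)) \<le> m' l"
      proof (intro ballI impI)
        fix l assume l: "l \<in> {2..n}" and lt: "m' l < d' l"
        have "\<beta> * (d 1 / (real n - 1)) \<le> m l" using F2[OF l] lt d'l[OF l] m'l[OF l] by simp
        moreover have "\<beta> * ((d 1 - e) / (real n - 1)) \<le> \<beta> * (d 1 / (real n - 1))"
          using e b0 Lpos by (intro mult_left_mono divide_right_mono) auto
        ultimately show "\<beta> * (m' 1 / (real n - 1)) \<le> m' l" unfolding m'_def using l by auto
      qed
    qed
    have le: "Gv n 0 \<beta> \<omega> s d' m' \<le> Gv n 0 \<beta> \<omega> s d m" using opt[OF A'] .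
    have leaves: "\<forall>l\<in>{2..n}. m' l \<le> d' l" using F1l d'l m'l by auto
    have G': "Gv n 0 \<beta> \<omega> s d' m' = ((d 1 - e) * (1 - (d 1 - e)) + (\<Sum>l\<in>{2..n}. d l * (1 - d l)))
     - \<omega> * (1 - \<beta>) * ((d 1 - e) + (\<Sum>l\<in>{2..n}. max (m l) (\<beta> * ((d 1 - e) / (real n - 1)))))
     - s * (2 * (\<Sum>l\<in>{2..n}. d l - m l))"
    proof -
      have "Gv n 0 \<beta> \<omega> s d' m' = (d' 1 * (1 - d' 1) + (\<Sum>l\<in>{2..n}. d' l * (1 - d' l)))
         - \<omega> * (1 - \<beta>) * (max (m' 1) (\<beta> * (\<Sum>l\<in>{2..n}. m' l)) + (\<Sum>l\<in>{2..n}. max (m' l) (\<beta> * (m' 1 / (real n - 1)))))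
         - s * (2 * (\<Sum>l\<in>{2..n}. d' l - m' l))"
        using Gv_hub0[OF n2, of d' m' \<beta> \<omega> s] leaves unfolding d'_def m'_def by simp
      moreover have "(\<Sum>l\<in>{2..n}. d' l * (1 - d' l)) = (\<Sum>l\<in>{2..n}. d l * (1 - d l))"
        using d'l by (intro sum.cong) auto
      moreover have "(\<Sum>l\<in>{2..n}. max (m' l) (\<beta> * (m' 1 / (real n - 1)))) = (\<Sum>l\<in>{2..n}. max (m l) (\<beta> * ((d 1 - e) / (real n - 1))))"
        using m'l unfolding m'_def by (intro sum.cong) auto
      moreover have "(\<Sum>l\<in>{2..n}. d' l - m' l) = (\<Sum>l\<in>{2..n}. d l - m l)"
        using d'l m'l by (intro sum.cong) auto
      moreover have "max (m' 1) (\<beta> * (\<Sum>l\<in>{2..n}. m' l)) = d 1 - e" unfolding sm' using e unfolding m'_def by simp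
      moreover have "d' 1 = d 1 - e" unfolding d'_def by simp
      ultimately show ?thesis by simp
    qed
    have cl: "(\<Sum>l\<in>{2..n}. max (m l) (\<beta> * ((d 1 - e) / (real n - 1)))) \<le> (\<Sum>l\<in>{2..n}. max (m l) (\<beta> * (d 1 / (real n - 1))))"
    proof (rule sum_mono)
      fix l assume "l \<in> {2..n}"
      have "\<beta> * ((d 1 - e) / (real n - 1)) \<le> \<beta> * (d 1 / (real n - 1))"
        using e b0 Lpos by (intro mult_left_mono divide_right_mono) auto
      then show "max (m l) (\<beta> * ((d 1 - e) / (real n - 1))) \<le> max (m l) (\<beta> * (d 1 / (real n - 1)))" by simp
    qed
    have k0: "0 \<le> \<omega> * (1 - \<beta>)" using om b1 by simp
    have hm: "max (d 1) (\<beta> * M) = d 1" using bm unfolding M_def by simp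
    have "\<omega> * (1 - \<beta>) * (\<Sum>l\<in>{2..n}. max (m l) (\<beta> * ((d 1 - e) / (real n - 1)))) \<le> \<omega> * (1 - \<beta>) * (\<Sum>l\<in>{2..n}. max (m l) (\<beta> * (d 1 / (real n - 1))))"
      using cl k0 by (rule mult_left_mono)
    then have "(d 1 - e) * (1 - (d 1 - e)) - d 1 * (1 - d 1) + \<omega> * (1 - \<beta>) * e \<le> 0"
      using le unfolding G' Gcur M_def[symmetric] hm by (simp add: algebra_simps)
    then have "e * (\<omega> * (1 - \<beta>) - (1 - 2 * d 1) - e) \<le> 0" by (simp add: algebra_simps)
    then have "\<omega> * (1 - \<beta>) - (1 - 2 * d 1) - e \<le> 0" using e(1) by (simp add: mult_le_0_iff)
    then show ?thesis by simp
  qed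
  have "\<omega> * (1 - \<beta>) - (1 - 2 * d 1) \<le> 0"
    by (rule eps_le[of "d 1 - \<beta> * M"]) (use bm key in \<open>auto simp: M_def\<close>)
  then show ?thesis by simp
qed

lemma caseI:
  assumes bm: "\<beta> * (\<Sum>l\<in>{2..n}. m l) < d 1"
  shows False
proof -
  have B: "\<omega> * (1 - \<beta>) \<le> 1 - 2 * d 1" using hubB[OF bm] .
  have "0 < \<omega> * (1 - \<beta>)" using om b1 by simp
  then have "d 1 < 1" using B by simp
  then have A: "1 - 2 * d 1 \<le> s * (real n - 2) / (real n - 1)" using hubA bm by simp
  have "s * (real n - 2) / (real n - 1) \<le> s"
    using s0 Lpos by (simp add: divide_le_eq mult_left_mono)
  then show False using A B sk by linarith
qed

lemma caseIII0:
  assumes bm: "\<beta> * (\<Sum>l\<in>{2..n}. m l) \<le> d 1" and d10: "d 1 = 0"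
  shows False
proof -
  have A: "1 - 2 * d 1 \<le> s * (real n - 2) / (real n - 1)" using hubA bm d10 by simp
  have "s * (real n - 2) / (real n - 1) \<le> s"
    using s0 Lpos by (simp add: divide_le_eq mult_left_mono)
  then show False using A d10 s_half by linarith
qed


lemma caseII:
  assumes bm: "d 1 < \<beta> * (\<Sum>l\<in>{2..n}. m l)"
  shows False
proof -
  define M where "M = (\<Sum>l\<in>{2..n}. m l)"
  define h where "h = d 1 / (real n - 1)"
  have Lp: "real n - 1 > 0" using Lpos by simp
  have d10: "0 \<le> d 1" using F1h by simp
  have h0: "0 \<le> h" unfolding h_def using d10 Lp by simp
  obtain l where l: "l \<in> {2..n}" "\<beta> * h < m l"
  proof (rule ccontr)
    assume "\<not> thesis"
    then have all: "\<forall>l\<in>{2..n}. m l \<le> \<beta> * h" using that by force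
    have "M \<le> (\<Sum>l\<in>{2..n}. \<beta> * h)" unfolding M_def using all by (intro sum_mono) auto
    also have "\<dots> = (real n - 1) * (\<beta> * h)" using cardL by simp
    also have "\<dots> = \<beta> * d 1" unfolding h_def using Lp by simp
    finally have "\<beta> * M \<le> \<beta> * (\<beta> * d 1)" using b0 by simp
    also have "\<dots> = (\<beta> * \<beta>) * d 1" by simp
    also have "\<dots> \<le> 1 * d 1"
    proof (rule mult_right_mono)
      show "\<beta> * \<beta> \<le> 1" using b0 b1 by (simp add: mult_le_one less_imp_le)
    qed (use d10 in simp)
    finally show False using bm unfolding M_def by simp
  qed
  define \<eta> where "\<eta> = min (m l - \<beta> * h) (M - d 1 / \<beta>)"
  have eta0: "0 < \<eta>" unfolding \<eta>_def using l bm b0 unfolding M_def by (simp add: pos_divide_less_eq mult.commute)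
  define m' where "m' = (\<lambda>i. if i = l then m l - \<eta> else m i)"
  have l1: "l \<noteq> 1" using l by auto
  have m'1: "m' 1 = d 1" unfolding m'_def using l1 hub by simp
  have m'l: "m' l = m l - \<eta>" unfolding m'_def by simp
  have ml_ge: "\<beta> * h \<le> m l - \<eta>" unfolding \<eta>_def by simp
  have A': "ach n 0 \<beta> d m'"
    unfolding ach_star[OF n2]
  proof (intro conjI)
    show "\<forall>i\<in>{1..n}. 0 \<le> m' i \<and> m' i \<le> d i \<and> d i \<le> 1"
    proof -
      have "0 \<le> \<beta> * h" using h0 b0 by simp
      then have "0 \<le> m l - \<eta>" using ml_ge by linarith
      then show ?thesis using F1 eta0 F1l[OF l(1)] unfolding m'_def by auto
    qed
    show "m' 1 < d 1 \<longrightarrow> \<beta> * (\<Sum>l\<in>{2..n}. m' l) \<le> m' 1" using m'1 by simp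
    show "\<forall>i\<in>{2..n}. m' i < d i \<longrightarrow> \<beta> * (m' 1 / (real n - 1)) \<le> m' i"
      using F2 m'1 ml_ge hub unfolding m'_def h_def by auto
  qed
  have le: "Gv n 0 \<beta> \<omega> s d m' \<le> Gv n 0 \<beta> \<omega> s d m" using opt[OF A'] .
  have leaves: "\<forall>i\<in>{2..n}. m' i \<le> d i" using F1l eta0 F1l[OF l(1)] unfolding m'_def by auto
  have sM: "(\<Sum>i\<in>{2..n}. m' i) = M - \<eta>"
  proof -
    have "(\<Sum>i\<in>{2..n}. m' i) = (\<Sum>i\<in>{2..n}. if i = l then m l - \<eta> else m i)"
      unfolding m'_def ..
    then show ?thesis using sum_if_one[of "{2..n}" l] l(1) unfolding M_def by simp
  qed
  have sC: "(\<Sum>i\<in>{2..n}. max (m' i) (\<beta> * (d 1 / (real n - 1)))) = (\<Sum>i\<in>{2..n}. max (m i) (\<beta> * (d 1 / (real n - 1)))) - \<eta>"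
  proof -
    have "(\<Sum>i\<in>{2..n}. max (m' i) (\<beta> * (d 1 / (real n - 1)))) = (\<Sum>i\<in>{2..n}. if i = l then m l - \<eta> else max (m i) (\<beta> * (d 1 / (real n - 1))))"
      unfolding m'_def using ml_ge unfolding h_def by (intro sum.cong) auto
    also have "\<dots> = (\<Sum>i\<in>{2..n}. max (m i) (\<beta> * (d 1 / (real n - 1)))) - max (m l) (\<beta> * (d 1 / (real n - 1))) + (m l - \<eta>)"
      using sum_if_one[of "{2..n}" l] l(1) by simp
    also have "max (m l) (\<beta> * (d 1 / (real n - 1))) = m l" using l(2) unfolding h_def by simp
    finally show ?thesis by simp
  qed
  have sW: "(\<Sum>i\<in>{2..n}. d i - m' i) = (\<Sum>i\<in>{2..n}. d i - m i) + \<eta>"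
  proof -
    have "(\<Sum>i\<in>{2..n}. d i - m' i) = (\<Sum>i\<in>{2..n}. if i = l then d l - (m l - \<eta>) else d i - m i)"
      unfolding m'_def by (intro sum.cong) auto
    then show ?thesis using sum_if_one[of "{2..n}" l] l(1) by simp
  qed
  have hc': "max (d 1) (\<beta> * (M - \<eta>)) = \<beta> * (M - \<eta>)"
  proof -
    have "\<eta> \<le> M - d 1 / \<beta>" unfolding \<eta>_def by simp
    then have "d 1 / \<beta> \<le> M - \<eta>" by simp
    then have "d 1 \<le> \<beta> * (M - \<eta>)" using b0 by (simp add: pos_divide_le_eq mult.commute)
    then show ?thesis by simp
  qed
  have hc: "max (d 1) (\<beta> * M) = \<beta> * M" using bm unfolding M_def by simp
  have G': "Gv n 0 \<beta> \<omega> s d m' = (d 1 * (1 - d 1) + (\<Sum>l\<in>{2..n}. d l * (1 - d l)))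
     - \<omega> * (1 - \<beta>) * (\<beta> * (M - \<eta>) + ((\<Sum>i\<in>{2..n}. max (m i) (\<beta> * (d 1 / (real n - 1)))) - \<eta>))
     - s * (2 * ((\<Sum>i\<in>{2..n}. d i - m i) + \<eta>))"
    using Gv_hub0[OF n2, of d m' \<beta> \<omega> s] m'1 leaves sM sC sW hc' by simp
  have G: "Gv n 0 \<beta> \<omega> s d m = (d 1 * (1 - d 1) + (\<Sum>l\<in>{2..n}. d l * (1 - d l)))
     - \<omega> * (1 - \<beta>) * (\<beta> * M + (\<Sum>i\<in>{2..n}. max (m i) (\<beta> * (d 1 / (real n - 1)))))
     - s * (2 * (\<Sum>i\<in>{2..n}. d i - m i))"
    using Gcur hc unfolding M_def by simp
  have "Gv n 0 \<beta> \<omega> s d m' - Gv n 0 \<beta> \<omega> s d m = \<eta> * (\<omega> * (1 - \<beta>) * (1 + \<beta>) - 2 * s)"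
    unfolding G' G by (simp add: algebra_simps)
  moreover have "0 < \<eta> * (\<omega> * (1 - \<beta>) * (1 + \<beta>) - 2 * s)" using eta0 s2 by simp
  ultimately show False using le by simp
qed

lemma kktR1:
  assumes tight: "d 1 = \<beta> * (\<Sum>l\<in>{2..n}. m l)" and l: "l \<in> {2..n}" "m l < \<beta> * (d 1 / (real n - 1))"
  shows "1 - 2 * d l \<le> \<omega> * (1 - \<beta>) * \<beta>"
proof -
  define M where "M = (\<Sum>l\<in>{2..n}. m l)"
  define h where "h = d 1 / (real n - 1)"
  have Lp: "real n - 1 > 0" using Lpos by simp
  have l1: "l \<noteq> 1" using l by auto
  have dl: "d l = m l" using F2[OF l(1)] l(2) F1l[OF l(1)] by force
  have bh1: "\<beta> * h \<le> 1"
  proof -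
    have "h \<le> 1" unfolding h_def using F1h Lpos by (simp add: divide_le_eq)
    moreover have "0 \<le> h" unfolding h_def using F1h Lp by simp
    ultimately show ?thesis using b0 b1 by (metis less_eq_real_def mult_le_one)
  qed
  have key: "1 - 2 * d l - \<omega> * (1 - \<beta>) * \<beta> \<le> e" if e: "0 < e" "e \<le> \<beta> * h - m l" for e
  proof -
    define d' where "d' = (\<lambda>i. if i = l then d l + e else d i)"
    define m' where "m' = (\<lambda>i. if i = l then m l + e else m i)"
    have d'1: "d' 1 = d 1" and m'1: "m' 1 = m 1" unfolding d'_def m'_def using l1 by auto
    have A': "ach n 0 \<beta> d' m'"
      unfolding ach_star[OF n2]
    proof (intro conjI)
      show "\<forall>i\<in>{1..n}. 0 \<le> m' i \<and> m' i \<le> d' i \<and> d' i \<le> 1"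
      proof
        fix i assume i: "i \<in> {1..n}"
        show "0 \<le> m' i \<and> m' i \<le> d' i \<and> d' i \<le> 1"
        proof (cases "i = l")
          case True
          have "0 \<le> m l" "m l + e \<le> 1" using F1l[OF l(1)] e bh1 by linarith+
          then show ?thesis using True dl e unfolding d'_def m'_def by simp
        next
          case False
          then show ?thesis using F1[OF i] unfolding d'_def m'_def by simp
        qed
      qed
      show "m' 1 < d' 1 \<longrightarrow> \<beta> * (\<Sum>l\<in>{2..n}. m' l) \<le> m' 1" using d'1 m'1 hub by simp
      show "\<forall>i\<in>{2..n}. m' i < d' i \<longrightarrow> \<beta> * (m' 1 / (real n - 1)) \<le> m' i"
      proof (intro ballI impI)
        fix i assume i: "i \<in> {2..n}" and lt: "m' i < d' i"
        have "i \<noteq> l" using lt dl unfolding d'_def m'_def by auto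
        then show "\<beta> * (m' 1 / (real n - 1)) \<le> m' i"
          using F2[OF i] lt m'1 hub unfolding d'_def m'_def by simp
      qed
    qed
    have le: "Gv n 0 \<beta> \<omega> s d' m' \<le> Gv n 0 \<beta> \<omega> s d m" using opt[OF A'] .
    have leaves: "\<forall>i\<in>{2..n}. m' i \<le> d' i" using F1l dl unfolding d'_def m'_def by simp
    have sM: "(\<Sum>i\<in>{2..n}. m' i) = M + e"
    proof -
      have "(\<Sum>i\<in>{2..n}. m' i) = (\<Sum>i\<in>{2..n}. if i = l then m l + e else m i)" unfolding m'_def ..
      then show ?thesis using sum_if_one[of "{2..n}" l] l(1) unfolding M_def by simp
    qed
    have sR: "(\<Sum>i\<in>{2..n}. d' i * (1 - d' i)) = (\<Sum>i\<in>{2..n}. d i * (1 - d i)) - d l * (1 - d l) + (d l + e) * (1 - (d l + e))"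
    proof -
      have "(\<Sum>i\<in>{2..n}. d' i * (1 - d' i)) = (\<Sum>i\<in>{2..n}. if i = l then (d l + e) * (1 - (d l + e)) else d i * (1 - d i))"
        unfolding d'_def by (intro sum.cong) auto
      then show ?thesis using sum_if_one[of "{2..n}" l] l(1) by simp
    qed
    have sC: "(\<Sum>i\<in>{2..n}. max (m' i) (\<beta> * (d 1 / (real n - 1)))) = (\<Sum>i\<in>{2..n}. max (m i) (\<beta> * (d 1 / (real n - 1))))"
      using e l(2) unfolding m'_def h_def by (intro sum.cong) auto
    have sW: "(\<Sum>i\<in>{2..n}. d' i - m' i) = (\<Sum>i\<in>{2..n}. d i - m i)"
      unfolding d'_def m'_def by (intro sum.cong) auto
    have M0: "0 \<le> M" unfolding M_def using F1l by (intro sum_nonneg) auto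
    have hc': "max (d 1) (\<beta> * (M + e)) = \<beta> * (M + e)" using tight e b0 unfolding M_def by simp
    have hc: "max (d 1) (\<beta> * M) = \<beta> * M" using tight unfolding M_def by simp
    have G': "Gv n 0 \<beta> \<omega> s d' m' = (d 1 * (1 - d 1) + ((\<Sum>i\<in>{2..n}. d i * (1 - d i)) - d l * (1 - d l) + (d l + e) * (1 - (d l + e))))
       - \<omega> * (1 - \<beta>) * (\<beta> * (M + e) + (\<Sum>i\<in>{2..n}. max (m i) (\<beta> * (d 1 / (real n - 1)))))
       - s * (2 * (\<Sum>i\<in>{2..n}. d i - m i))"
      using Gv_hub0[OF n2, of d' m' \<beta> \<omega> s] d'1 m'1 hub leaves sM sR sC sW hc' by simp
    have G: "Gv n 0 \<beta> \<omega> s d m = (d 1 * (1 - d 1) + (\<Sum>l\<in>{2..n}. d l * (1 - d l)))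
       - \<omega> * (1 - \<beta>) * (\<beta> * M + (\<Sum>i\<in>{2..n}. max (m i) (\<beta> * (d 1 / (real n - 1)))))
       - s * (2 * (\<Sum>i\<in>{2..n}. d i - m i))"
      using Gcur hc unfolding M_def by simp
    have "e * (1 - 2 * d l - \<omega> * (1 - \<beta>) * \<beta> - e) \<le> 0"
      using le unfolding G' G by (simp add: algebra_simps)
    then have "1 - 2 * d l - \<omega> * (1 - \<beta>) * \<beta> - e \<le> 0" using e(1) by (simp add: mult_le_0_iff)
    then show ?thesis by simp
  qed
  have "1 - 2 * d l - \<omega> * (1 - \<beta>) * \<beta> \<le> 0"
    by (rule eps_le[of "\<beta> * h - m l"]) (use l key in \<open>auto simp: h_def\<close>)
  then show ?thesis by simp
qed


lemma ex_pos_lb: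
  fixes f :: "nat \<Rightarrow> real"
  assumes "finite A" "\<forall>l\<in>A. 0 < f l"
  shows "\<exists>e>0. \<forall>l\<in>A. e \<le> f l"
  using assms
proof (induction A rule: finite_induct)
  case empty
  then show ?case by (intro exI[of _ 1]) auto
next
  case (insert x F)
  then obtain e where e: "e > 0" "\<forall>l\<in>F. e \<le> f l" by auto
  show ?case using e insert.prems by (intro exI[of _ "min e (f x)"]) auto
qed

lemma caseIII1:
  assumes tight: "d 1 = \<beta> * (\<Sum>l\<in>{2..n}. m l)" and d1p: "0 < d 1"
  shows False
proof -
  define M where "M = (\<Sum>l\<in>{2..n}. m l)"
  define L where "L = real n - 1"
  define h where "h = d 1 / L"
  define k where "k = \<omega> * (1 - \<beta>)"
  have Lp: "L > 0" and L2: "L \<ge> 2" unfolding L_def using Lpos by simp_all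
  have h0: "0 < h" unfolding h_def using d1p Lp by simp
  have bh0: "0 < \<beta> * h" using h0 b0 by simp
  obtain j0 where j0: "j0 \<in> {2..n}" "m j0 < d j0" using j0ex .
  have dj0: "\<beta> * h < d j0" using F2[OF j0] j0(2) unfolding h_def L_def by simp
  have kJ: "2 * s \<le> 1 - 2 * d j0" using kktJ[OF j0] .
  define \<sigma> where "\<sigma> = 1 - 2 * (\<beta> * h) - 2 * s"
  have sig0: "0 < \<sigma>" unfolding \<sigma>_def using dj0 kJ by simp
  have R1s: "s \<le> k * \<beta>" if l: "l \<in> {2..n}" "m l < \<beta> * h" for l
  proof -
    have "1 - 2 * d l \<le> k * \<beta>" using kktR1[OF tight l(1)] l(2) unfolding k_def h_def L_def by simp
    moreover have "d l = m l" using F2[OF l(1)] l(2) F1l[OF l(1)] unfolding h_def L_def by force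
    ultimately show ?thesis using l(2) dj0 kJ s0 by linarith
  qed
  obtain lP where lP: "lP \<in> {2..n}" "\<beta> * h < m lP"
  proof (rule ccontr)
    assume "\<not> thesis"
    then have all: "\<forall>l\<in>{2..n}. m l \<le> \<beta> * h" using that by force
    have "M \<le> (\<Sum>l\<in>{2..n}. \<beta> * h)" unfolding M_def using all by (intro sum_mono) auto
    also have "\<dots> = L * (\<beta> * h)" using cardL unfolding L_def by simp
    also have "\<dots> = \<beta> * d 1" unfolding h_def using Lp by simp
    finally have "\<beta> * M \<le> \<beta> * (\<beta> * d 1)" using b0 by simp
    also have "\<dots> = (\<beta> * \<beta>) * d 1" by simp
    also have "\<dots> < 1 * d 1"
    proof (rule mult_strict_right_mono)
      have "\<beta> * \<beta> < 1 * 1" using b0 b1 by (intro mult_strict_mono) auto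
      then show "\<beta> * \<beta> < 1" by simp
    qed (use d1p in simp)
    finally show False using tight unfolding M_def by simp
  qed
  define bnd where "bnd = (\<lambda>l. if \<beta> * h < m l then m l - \<beta> * h else if m l < \<beta> * h then h - m l / \<beta>
                       else if m l < d l then d l - m l else 1)"
  have bnd0: "\<forall>l\<in>{2..n}. 0 < bnd l"
  proof
    fix l assume "l \<in> {2..n}"
    have "m l < \<beta> * h \<Longrightarrow> m l / \<beta> < h" using b0 by (simp add: divide_less_eq mult.commute)
    then show "0 < bnd l" unfolding bnd_def by auto
  qed
  obtain \<eta>0 where eta0: "0 < \<eta>0" "\<forall>l\<in>{2..n}. \<eta>0 \<le> bnd l" using ex_pos_lb[OF _ bnd0] by auto
  define \<eta> where "\<eta> = min \<eta>0 \<sigma>"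
  have eta: "0 < \<eta>" "\<eta> \<le> \<sigma>" "\<forall>l\<in>{2..n}. \<eta> \<le> bnd l" unfolding \<eta>_def using eta0 sig0 by auto
  define pI where "pI = (\<lambda>l. if \<beta> * h < m l then \<eta> else (0::real))"
  define SP where "SP = (\<Sum>l\<in>{2..n}. pI l)"
  define \<gamma> where "\<gamma> = \<beta> * SP"
  have SP1: "\<eta> \<le> SP"
  proof -
    have "pI lP \<le> SP" unfolding SP_def pI_def using lP eta(1) by (intro member_le_sum) auto
    then show ?thesis using lP unfolding pI_def by simp
  qed
  have SP2: "SP \<le> L * \<eta>"
  proof -
    have "SP \<le> (\<Sum>l\<in>{2..n}. \<eta>)" unfolding SP_def pI_def using eta(1) by (intro sum_mono) auto
    then show ?thesis using cardL unfolding L_def by simp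
  qed
  have gam0: "0 < \<gamma>" unfolding \<gamma>_def using SP1 eta(1) b0 by simp
  have gamL: "\<gamma> / L \<le> \<eta>"
  proof -
    have "\<gamma> \<le> L * \<eta>" unfolding \<gamma>_def using SP2 b0 b1 SP1 eta(1)
      by (smt (verit) mult_le_cancel_right1 mult_nonneg_nonneg)
    then show ?thesis using Lp by (simp add: divide_le_eq mult.commute)
  qed
  have gamL0: "0 < \<gamma> / L" using gam0 Lp by simp
  have pIm: "pI l \<le> m l" if l: "l \<in> {2..n}" for l
  proof (cases "\<beta> * h < m l")
    case True
    have "\<eta> \<le> bnd l" using eta(3) l by blast
    then have "\<eta> \<le> m l - \<beta> * h" using True unfolding bnd_def by simp
    then show ?thesis using True bh0 unfolding pI_def by simp
  next
    case False
    then show ?thesis using F1l[OF l] unfolding pI_def by simp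
  qed
  have SPM: "SP \<le> M" unfolding SP_def M_def using pIm by (intro sum_mono) auto
  have gamd1: "\<gamma> \<le> d 1" unfolding \<gamma>_def using SPM tight b0 unfolding M_def by simp
  define d' where "d' = (\<lambda>i. if i = 1 then d 1 else if m i = \<beta> * h \<and> d i = m i then d i + \<gamma> / L else d i)"
  define m' where "m' = (\<lambda>i. if i = 1 then d 1 - \<gamma> else m i - pI i)"
  define rv where "rv = (\<lambda>l. if m l = \<beta> * h \<and> d l = m l then (\<gamma> / L) * (1 - 2 * d l - \<gamma> / L) else 0)"
  define cd where "cd = (\<lambda>l. if \<beta> * h < m l then - \<eta> else if m l < \<beta> * h then - (\<beta> * (\<gamma> / L)) else 0)"
  define Eg where "Eg = (\<lambda>l. if m l = \<beta> * h \<and> d l = m l then \<gamma> / L else 0)"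
  define zd where "zd = (\<lambda>l. if \<beta> * h < m l then \<eta> else if m l < \<beta> * h then \<gamma> / L
                         else if d l = m l then \<gamma> / L else 0)"
  have d'1: "d' 1 = d 1" and m'1: "m' 1 = d 1 - \<gamma>" unfolding d'_def m'_def by simp_all
  have d'l: "d' l = (if m l = \<beta> * h \<and> d l = m l then d l + \<gamma> / L else d l)" if "l \<in> {2..n}" for l
    using that unfolding d'_def by auto
  have m'l: "m' l = m l - pI l" if "l \<in> {2..n}" for l using that unfolding m'_def by auto
  have hh: "(d 1 - \<gamma>) / L = h - \<gamma> / L" unfolding h_def by (simp add: diff_divide_distrib)
  have leaf: "0 \<le> m' l \<and> m' l \<le> d' l \<and> d' l \<le> 1 \<and> (m' l < d' l \<longrightarrow> \<beta> * h \<le> m' l)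
      \<and> d' l * (1 - d' l) = d l * (1 - d l) + rv l
      \<and> max (m' l) (\<beta> * ((d 1 - \<gamma>) / L)) = max (m l) (\<beta> * h) + cd l
      \<and> d' l - m' l = (d l - m l) + pI l + Eg l
      \<and> max (d' l - m' l) (\<gamma> / L) = (d l - m l) + zd l
      \<and> 0 \<le> rv l + k * \<beta> * pI l - k * cd l - s * (pI l + Eg l + zd l)
      \<and> (l = lP \<longrightarrow> 0 < rv l + k * \<beta> * pI l - k * cd l - s * (pI l + Eg l + zd l))"
    if l: "l \<in> {2..n}" for l
  proof -
    have Fl: "0 \<le> m l" "m l \<le> d l" "d l \<le> 1" using F1l[OF l] by auto
    have F2l: "m l < d l \<Longrightarrow> \<beta> * h \<le> m l" using F2[OF l] unfolding h_def L_def by simp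
    have bl: "\<eta> \<le> bnd l" using eta(3) l by simp
    have bhh: "\<beta> * (h - \<gamma> / L) \<le> \<beta> * h" using gamL0 b0 by simp
    consider (P) "\<beta> * h < m l" | (R) "m l < \<beta> * h" | (E) "m l = \<beta> * h" "d l = m l" | (T) "m l = \<beta> * h" "m l < d l"
      using Fl by linarith
    then show ?thesis
    proof cases
      case P
      have e1: "\<eta> \<le> m l - \<beta> * h" using bl P unfolding bnd_def by simp
      have nE: "\<not> (m l = \<beta> * h \<and> d l = m l)" using P by simp
      have vals: "d' l = d l" "m' l = m l - \<eta>" "rv l = 0" "cd l = - \<eta>" "Eg l = 0" "zd l = \<eta>" "pI l = \<eta>"
        using P d'l[OF l] m'l[OF l] unfolding rv_def cd_def Eg_def zd_def pI_def by auto
      have c1: "max (m l - \<eta>) (\<beta> * (h - \<gamma> / L)) = m l - \<eta>" using e1 bhh by simp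
      have c2: "max (m l) (\<beta> * h) = m l" using P by simp
      have c3: "max (d l - (m l - \<eta>)) (\<gamma> / L) = d l - m l + \<eta>" using Fl gamL by simp
      have ph: "0 < \<eta> * (k * (1 + \<beta>) - 2 * s)" using eta(1) s2 unfolding k_def by simp
      have "rv l + k * \<beta> * pI l - k * cd l - s * (pI l + Eg l + zd l) = \<eta> * (k * (1 + \<beta>) - 2 * s)"
        unfolding vals by (simp add: algebra_simps)
      then show ?thesis using vals c1 c2 c3 Fl e1 bh0 ph F2l eta(1) unfolding hh by auto
    next
      case R
      have dl: "d l = m l" using F2l R Fl by force
      have e1: "\<eta> \<le> h - m l / \<beta>" using bl R unfolding bnd_def by simp
      have mlb: "m l \<le> \<beta> * (h - \<gamma> / L)"
      proof -
        have "m l / \<beta> \<le> h - \<gamma> / L" using e1 gamL by simp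
        then show ?thesis using b0 by (simp add: divide_le_eq mult.commute)
      qed
      have vals: "d' l = d l" "m' l = m l" "rv l = 0" "cd l = - (\<beta> * (\<gamma> / L))" "Eg l = 0" "zd l = \<gamma> / L" "pI l = 0"
        using R d'l[OF l] m'l[OF l] unfolding rv_def cd_def Eg_def zd_def pI_def by auto
      have c1: "max (m l) (\<beta> * (h - \<gamma> / L)) = \<beta> * (h - \<gamma> / L)" using mlb by simp
      have c2: "max (m l) (\<beta> * h) = \<beta> * h" using R by simp
      have ks: "0 \<le> (\<gamma> / L) * (k * \<beta> - s)" using R1s[OF l R] gamL0 by (intro mult_nonneg_nonneg) auto
      have "rv l + k * \<beta> * pI l - k * cd l - s * (pI l + Eg l + zd l) = (\<gamma> / L) * (k * \<beta> - s)"
        unfolding vals by (simp add: algebra_simps)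
      moreover have "l \<noteq> lP" using R lP by auto
      ultimately show ?thesis using vals c1 c2 Fl dl ks gamL0 unfolding hh by (auto simp: algebra_simps)
    next
      case E
      have vals: "d' l = d l + \<gamma> / L" "m' l = m l" "rv l = (\<gamma> / L) * (1 - 2 * d l - \<gamma> / L)" "cd l = 0"
          "Eg l = \<gamma> / L" "zd l = \<gamma> / L" "pI l = 0"
        using E d'l[OF l] m'l[OF l] unfolding rv_def cd_def Eg_def zd_def pI_def by auto
      have c1: "max (m l) (\<beta> * (h - \<gamma> / L)) = \<beta> * h" using E bhh by simp
      have c2: "max (m l) (\<beta> * h) = \<beta> * h" using E by simp
      have le1: "d l + \<gamma> / L \<le> 1"
      proof -
        have "\<gamma> / L \<le> \<sigma>" using gamL eta(2) by simp
        then show ?thesis using E bh0 s0 unfolding \<sigma>_def by linarith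
      qed
      have ge: "0 \<le> (\<gamma> / L) * (\<sigma> - \<gamma> / L)" using gamL eta(2) gamL0 by (intro mult_nonneg_nonneg) auto
      have "rv l + k * \<beta> * pI l - k * cd l - s * (pI l + Eg l + zd l) = (\<gamma> / L) * (\<sigma> - \<gamma> / L)"
        unfolding vals \<sigma>_def using E by (simp add: algebra_simps)
      moreover have "l \<noteq> lP" using E lP by auto
      moreover have "(d l + \<gamma> / L) * (1 - (d l + \<gamma> / L)) = d l * (1 - d l) + (\<gamma> / L) * (1 - 2 * d l - \<gamma> / L)"
        by (simp add: algebra_simps)
      ultimately show ?thesis using vals c1 c2 Fl le1 ge gamL0 E unfolding hh by auto
    next
      case T
      have e1: "\<eta> \<le> d l - m l" using bl T unfolding bnd_def by simp
      have vals: "d' l = d l" "m' l = m l" "rv l = 0" "cd l = 0" "Eg l = 0" "zd l = 0" "pI l = 0"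
        using T d'l[OF l] m'l[OF l] unfolding rv_def cd_def Eg_def zd_def pI_def by auto
      have c1: "max (m l) (\<beta> * (h - \<gamma> / L)) = \<beta> * h" using T bhh by simp
      have c3: "max (d l - m l) (\<gamma> / L) = d l - m l" using e1 gamL by simp
      have "l \<noteq> lP" using T lP by auto
      then show ?thesis using vals c1 c3 Fl T unfolding hh by auto
    qed
  qed
  have A': "ach n 0 \<beta> d' m'"
    unfolding ach_star[OF n2]
  proof (intro conjI)
    show "\<forall>i\<in>{1..n}. 0 \<le> m' i \<and> m' i \<le> d' i \<and> d' i \<le> 1"
    proof
      fix i assume i: "i \<in> {1..n}"
      show "0 \<le> m' i \<and> m' i \<le> d' i \<and> d' i \<le> 1"
      proof (cases "i = 1")
        case True
        then show ?thesis using d'1 m'1 gamd1 gam0 F1h by simp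
      next
        case False
        then have "i \<in> {2..n}" using i by auto
        then show ?thesis using leaf by blast
      qed
    qed
    have sm': "(\<Sum>l\<in>{2..n}. m' l) = M - SP"
      unfolding M_def SP_def sum_subtractf[symmetric] using m'l by (intro sum.cong) auto
    show "m' 1 < d' 1 \<longrightarrow> \<beta> * (\<Sum>l\<in>{2..n}. m' l) \<le> m' 1"
      unfolding sm' m'1 using tight unfolding M_def \<gamma>_def by (simp add: algebra_simps)
    show "\<forall>l\<in>{2..n}. m' l < d' l \<longrightarrow> \<beta> * (m' 1 / (real n - 1)) \<le> m' l"
    proof (intro ballI impI)
      fix l assume l: "l \<in> {2..n}" and lt: "m' l < d' l"
      have "\<beta> * h \<le> m' l" using leaf[OF l] lt by blast
      moreover have "\<beta> * (m' 1 / (real n - 1)) \<le> \<beta> * h"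
        unfolding m'1 L_def[symmetric] hh using gamL0 b0 by simp
      ultimately show "\<beta> * (m' 1 / (real n - 1)) \<le> m' l" by linarith
    qed
  qed
  have le: "Gv n 0 \<beta> \<omega> s d' m' \<le> Gv n 0 \<beta> \<omega> s d m" using opt[OF A'] .
  define W where "W = (\<Sum>l\<in>{2..n}. d l - m l)"
  have W0: "0 \<le> W" unfolding W_def using F1l by (intro sum_nonneg) auto
  have lR: "\<And>l. l \<in> {2..n} \<Longrightarrow> d' l * (1 - d' l) = d l * (1 - d l) + rv l" using leaf by blast
  have lC: "\<And>l. l \<in> {2..n} \<Longrightarrow> max (m' l) (\<beta> * ((d 1 - \<gamma>) / L)) = max (m l) (\<beta> * h) + cd l" using leaf by blast
  have lU: "\<And>l. l \<in> {2..n} \<Longrightarrow> d' l - m' l = (d l - m l) + pI l + Eg l" using leaf by blast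
  have lZ: "\<And>l. l \<in> {2..n} \<Longrightarrow> max (d' l - m' l) (\<gamma> / L) = (d l - m l) + zd l" using leaf by blast
  have sR: "(\<Sum>l\<in>{2..n}. d' l * (1 - d' l)) = (\<Sum>l\<in>{2..n}. d l * (1 - d l)) + (\<Sum>l\<in>{2..n}. rv l)"
    unfolding sum.distrib[symmetric] using lR by (rule sum.cong[OF refl])
  have sC: "(\<Sum>l\<in>{2..n}. max (m' l) (\<beta> * (m' 1 / (real n - 1)))) = (\<Sum>l\<in>{2..n}. max (m l) (\<beta> * h)) + (\<Sum>l\<in>{2..n}. cd l)"
    unfolding sum.distrib[symmetric] m'1 L_def[symmetric] using lC by (rule sum.cong[OF refl])
  have sU: "(\<Sum>l\<in>{2..n}. d' l - m' l) = W + SP + (\<Sum>l\<in>{2..n}. Eg l)"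
    unfolding W_def SP_def sum.distrib[symmetric] using lU by (rule sum.cong[OF refl])
  have g1: "d' 1 - m' 1 = \<gamma>" using d'1 m'1 by simp
  have sZ: "(\<Sum>l\<in>{2..n}. max (d' l - m' l) ((d' 1 - m' 1) / (real n - 1))) = W + (\<Sum>l\<in>{2..n}. zd l)"
    unfolding g1 W_def sum.distrib[symmetric] L_def[symmetric] using lZ by (rule sum.cong[OF refl])
  have Eg0: "0 \<le> (\<Sum>l\<in>{2..n}. Eg l)" unfolding Eg_def using gamL0 by (intro sum_nonneg) auto
  have hz: "max (d' 1 - m' 1) (\<Sum>l\<in>{2..n}. d' l - m' l) = W + SP + (\<Sum>l\<in>{2..n}. Eg l)"
  proof -
    have "d' 1 - m' 1 = \<gamma>" using d'1 m'1 by simp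
    moreover have "\<gamma> \<le> SP" unfolding \<gamma>_def using b1 SP1 eta(1) by simp
    ultimately show ?thesis unfolding sU using W0 Eg0 by simp
  qed
  have hc: "max (m' 1) (\<beta> * (\<Sum>l\<in>{2..n}. m' l)) = d 1 - \<gamma>"
  proof -
    have "(\<Sum>l\<in>{2..n}. m' l) = M - SP"
      unfolding M_def SP_def sum_subtractf[symmetric] using m'l by (intro sum.cong) auto
    then have "\<beta> * (\<Sum>l\<in>{2..n}. m' l) = \<beta> * M - \<beta> * SP" by (simp add: right_diff_distrib)
    also have "\<dots> = d 1 - \<gamma>" using tight unfolding M_def \<gamma>_def by simp
    finally show ?thesis using m'1 by simp
  qed
  have G': "Gv n 0 \<beta> \<omega> s d' m' = (d 1 * (1 - d 1) + ((\<Sum>l\<in>{2..n}. d l * (1 - d l)) + (\<Sum>l\<in>{2..n}. rv l)))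
     - k * ((d 1 - \<gamma>) + ((\<Sum>l\<in>{2..n}. max (m l) (\<beta> * h)) + (\<Sum>l\<in>{2..n}. cd l)))
     - s * ((W + SP + (\<Sum>l\<in>{2..n}. Eg l)) + (W + (\<Sum>l\<in>{2..n}. zd l)))"
  proof -
    have G'0: "Gv n 0 \<beta> \<omega> s d' m' = (d' 1 * (1 - d' 1) + (\<Sum>l\<in>{2..n}. d' l * (1 - d' l)))
     - \<omega> * (1 - \<beta>) * (max (m' 1) (\<beta> * (\<Sum>l\<in>{2..n}. m' l)) + (\<Sum>l\<in>{2..n}. max (m' l) (\<beta> * (m' 1 / (real n - 1)))))
     - s * (max (d' 1 - m' 1) (\<Sum>l\<in>{2..n}. d' l - m' l) + (\<Sum>l\<in>{2..n}. max (d' l - m' l) ((d' 1 - m' 1) / (real n - 1))))"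
      by (rule Gv_star[OF n2])
    show ?thesis using G'0 unfolding sR sC hz sZ hc unfolding d'1 k_def .
  qed
  have G: "Gv n 0 \<beta> \<omega> s d m = (d 1 * (1 - d 1) + (\<Sum>l\<in>{2..n}. d l * (1 - d l)))
     - k * (d 1 + (\<Sum>l\<in>{2..n}. max (m l) (\<beta> * h)))
     - s * (2 * W)"
  proof -
    have "max (d 1) (\<beta> * (\<Sum>l\<in>{2..n}. m l)) = d 1" using tight by simp
    then show ?thesis using Gcur unfolding k_def W_def h_def L_def by simp
  qed
  define \<phi> where "\<phi> = (\<lambda>l. rv l + k * \<beta> * pI l - k * cd l - s * (pI l + Eg l + zd l))"
  have diff: "Gv n 0 \<beta> \<omega> s d' m' - Gv n 0 \<beta> \<omega> s d m = (\<Sum>l\<in>{2..n}. \<phi> l)"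
  proof -
    have "(\<Sum>l\<in>{2..n}. \<phi> l) = (\<Sum>l\<in>{2..n}. rv l) + k * \<beta> * SP - k * (\<Sum>l\<in>{2..n}. cd l)
        - s * (SP + (\<Sum>l\<in>{2..n}. Eg l) + (\<Sum>l\<in>{2..n}. zd l))"
      unfolding \<phi>_def SP_def by (simp add: sum.distrib sum_subtractf sum_distrib_left[symmetric] mult.assoc)
    then show ?thesis unfolding G' G \<gamma>_def by (simp add: algebra_simps)
  qed
  have "0 < (\<Sum>l\<in>{2..n}. \<phi> l)"
  proof (rule sum_pos2)
    show "finite {2..n}" by simp
    show "lP \<in> {2..n}" using lP by simp
    show "0 < \<phi> lP" using leaf[OF lP(1)] unfolding \<phi>_def by blast
    show "\<And>l. l \<in> {2..n} \<Longrightarrow> 0 \<le> \<phi> l" using leaf unfolding \<phi>_def by blast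
  qed
  then show False using le diff by simp
qed


lemma star_false: False
proof -
  consider "\<beta> * (\<Sum>l\<in>{2..n}. m l) < d 1" | "d 1 < \<beta> * (\<Sum>l\<in>{2..n}. m l)"
    | "d 1 = \<beta> * (\<Sum>l\<in>{2..n}. m l)" by linarith
  then show False
  proof cases
    case 1 then show ?thesis using caseI by blast
  next
    case 2 then show ?thesis using caseII by blast
  next
    case 3
    have "0 \<le> d 1" using F1h by simp
    then consider "d 1 = 0" | "0 < d 1" by linarith
    then show ?thesis
    proof cases
      case 1 then show ?thesis using caseIII0 3 by simp
    next
      case 2 then show ?thesis using caseIII1 3 by simp
    qed
  qed
qed

end


lemma star_contra:
  assumes "n \<ge> 3" "0 < \<beta>" "\<beta> < 1" "0 < \<omega>" "0 \<le> s"
    "s < \<omega> * (1 - \<beta>)" "2 * s < \<omega> * (1 - \<beta>) * (1 + \<beta>)"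
    "ach n 0 \<beta> d m"
    "\<And>d' m'. ach n 0 \<beta> d' m' \<Longrightarrow> Gv n 0 \<beta> \<omega> s d' m' \<le> Gv n 0 \<beta> \<omega> s d m"
    "m 1 = d 1" "\<exists>j\<in>{2..n}. m j < d j"
  shows False
  using star_false[OF assms] .

lemma big2s:
  assumes n2: "n \<ge> 2" and b: "0 < \<beta>" "\<beta> < 1" and om: "0 < \<omega>"
    and big: "\<omega> * (1 - \<beta>) * (1 + \<beta>) \<le> 2 * s"
    and hub: "m 1 = d 1" and lv: "\<forall>l\<in>{2..n}. m l \<le> d l"
  shows "Gv n 0 \<beta> \<omega> s d m \<le> Gv n 0 \<beta> \<omega> s d d"
proof -
  define W where "W = (\<Sum>l\<in>{2..n}. d l - m l)"
  define k where "k = \<omega> * (1 - \<beta>)"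
  have k0: "0 \<le> k" unfolding k_def using om b by simp
  have W0: "0 \<le> W" unfolding W_def using lv by (intro sum_nonneg) auto
  have Gd: "Gv n 0 \<beta> \<omega> s d d = (d 1 * (1 - d 1) + (\<Sum>l\<in>{2..n}. d l * (1 - d l)))
     - k * (max (d 1) (\<beta> * (\<Sum>l\<in>{2..n}. d l)) + (\<Sum>l\<in>{2..n}. max (d l) (\<beta> * (d 1 / (real n - 1)))))
     - s * (2 * 0)"
    using Gv_hub0[OF n2, of d d \<beta> \<omega> s] unfolding k_def by simp
  have Gm: "Gv n 0 \<beta> \<omega> s d m = (d 1 * (1 - d 1) + (\<Sum>l\<in>{2..n}. d l * (1 - d l)))
     - k * (max (d 1) (\<beta> * (\<Sum>l\<in>{2..n}. m l)) + (\<Sum>l\<in>{2..n}. max (m l) (\<beta> * (d 1 / (real n - 1)))))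
     - s * (2 * W)"
    using Gv_hub0[OF n2, of d m \<beta> \<omega> s] hub lv unfolding k_def W_def by simp
  have c1: "max (d 1) (\<beta> * (\<Sum>l\<in>{2..n}. d l)) \<le> max (d 1) (\<beta> * (\<Sum>l\<in>{2..n}. m l)) + \<beta> * W"
  proof -
    have "(\<Sum>l\<in>{2..n}. d l) = (\<Sum>l\<in>{2..n}. m l) + W" unfolding W_def by (simp add: sum_subtractf)
    moreover have "0 \<le> \<beta> * W" using W0 b by simp
    ultimately show ?thesis by (simp add: distrib_left)
  qed
  have c2: "(\<Sum>l\<in>{2..n}. max (d l) (\<beta> * (d 1 / (real n - 1)))) \<le> (\<Sum>l\<in>{2..n}. max (m l) (\<beta> * (d 1 / (real n - 1)))) + W"
  proof -
    have "(\<Sum>l\<in>{2..n}. max (d l) (\<beta> * (d 1 / (real n - 1)))) \<le> (\<Sum>l\<in>{2..n}. max (m l) (\<beta> * (d 1 / (real n - 1))) + (d l - m l))"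
    proof (rule sum_mono)
      fix l assume "l \<in> {2..n}"
      then have "m l \<le> d l" using lv by blast
      then show "max (d l) (\<beta> * (d 1 / (real n - 1))) \<le> max (m l) (\<beta> * (d 1 / (real n - 1))) + (d l - m l)"
        by linarith
    qed
    then show ?thesis unfolding W_def by (simp add: sum.distrib)
  qed
  have "k * (max (d 1) (\<beta> * (\<Sum>l\<in>{2..n}. d l)) + (\<Sum>l\<in>{2..n}. max (d l) (\<beta> * (d 1 / (real n - 1)))))
      \<le> k * (max (d 1) (\<beta> * (\<Sum>l\<in>{2..n}. m l)) + (\<Sum>l\<in>{2..n}. max (m l) (\<beta> * (d 1 / (real n - 1)))) + (1 + \<beta>) * W)"
    using c1 c2 k0 by (intro mult_left_mono) (auto simp: algebra_simps)
  moreover have "k * ((1 + \<beta>) * W) \<le> 2 * s * W" using big W0 unfolding k_def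
    by (metis mult.assoc mult.commute mult_right_mono)
  ultimately show ?thesis unfolding Gd Gm by (simp add: algebra_simps)
qed

theorem lemma2:
  fixes n :: nat and \<xi> \<beta> \<omega> s :: real
    and p \<delta> x z :: "nat \<Rightarrow> real" and y r :: "nat \<Rightarrow> nat \<Rightarrow> real"
  assumes "n \<ge> 3"
    and "0 \<le> \<xi>" and "\<xi> \<le> 1"
    and "0 < \<beta>" and "\<beta> < 1"
    and "\<omega> > 0" and "s \<ge> 0"
    and "optval_mixed n \<xi> \<beta> \<omega> s > optval_human n \<xi> \<beta> \<omega> s"
    and "optimal_P4 n \<xi> \<beta> \<omega> s p \<delta> x y z r"
  shows "\<forall>i\<in>{1..n}. z i > 0"
proof (rule ccontr)
  assume neg: "\<not> (\<forall>i\<in>{1..n}. z i > 0)"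
  then obtain i where i: "i \<in> {1..n}" "\<not> z i > 0" by blast
  have n3: "n \<ge> 3" and xi: "0 \<le> \<xi>" "\<xi> \<le> 1" and b: "0 < \<beta>" "\<beta> < 1" and om: "\<omega> > 0" and s0: "s \<ge> 0"
    using assms by auto
  have n2: "n \<ge> 2" using n3 by simp
  have F: "feasible_P4 n \<xi> \<beta> p \<delta> x y z r" using assms(9) unfolding optimal_P4_def by blast
  have optS: "\<And>p' \<delta>' x' y' z' r'. feasible_P4 n \<xi> \<beta> p' \<delta>' x' y' z' r' \<Longrightarrow>
      obj_P4 n \<omega> s p' \<delta>' z' \<le> obj_P4 n \<omega> s p \<delta> z"
    using assms(9) unfolding optimal_P4_def by blast
  define V where "V = obj_P4 n \<omega> s p \<delta> z"
  have VM: "optval_mixed n \<xi> \<beta> \<omega> s = V"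
    unfolding optval_mixed_def
  proof (rule cSup_eq_maximum)
    show "V \<in> {obj_P4 n \<omega> s p \<delta> z |p \<delta> x y z r. feasible_P4 n \<xi> \<beta> p \<delta> x y z r}"
      unfolding V_def using F by blast
    show "\<And>v. v \<in> {obj_P4 n \<omega> s p \<delta> z |p \<delta> x y z r. feasible_P4 n \<xi> \<beta> p \<delta> x y z r} \<Longrightarrow> v \<le> V"
      unfolding V_def using optS by blast
  qed
  have humle: "obj_P4 n \<omega> s p' \<delta>' z' \<le> optval_human n \<xi> \<beta> \<omega> s"
    if "feasible_P4 n \<xi> \<beta> p' \<delta>' x' y' z' r'" "\<forall>i\<in>{1..n}. z' i = 0" for p' \<delta>' x' y' z' r'
    unfolding optval_human_def
  proof (rule cSup_upper)
    show "obj_P4 n \<omega> s p' \<delta>' z' \<in> {obj_P4 n \<omega> s p \<delta> z |p \<delta> x y z r. feasible_P4 n \<xi> \<beta> p \<delta> x y z r \<and> (\<forall>i\<in>{1..n}. z i = 0)}"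
      using that by blast
    show "bdd_above {obj_P4 n \<omega> s p \<delta> z |p \<delta> x y z r. feasible_P4 n \<xi> \<beta> p \<delta> x y z r \<and> (\<forall>i\<in>{1..n}. z i = 0)}"
      unfolding bdd_above_def using optS by blast
  qed
  have HV: "optval_human n \<xi> \<beta> \<omega> s < V" using assms(8) VM by simp
  define d where "d = (\<lambda>i. demand (p i))"
  define m where "m = (\<lambda>i. min (x i) (demand (p i)))"
  define u where "u = (\<lambda>j. d j - m j)"
  have VG: "V \<le> Gv n \<xi> \<beta> \<omega> s d m" unfolding V_def d_def m_def using LB(1)[OF n2 xi b om s0 F] .
  have Am: "ach n \<xi> \<beta> d m" unfolding d_def m_def using LB(2)[OF n2 xi b om s0 F] .
  have zb: "\<forall>j\<in>{1..n}. max (u j) (inflow n \<xi> u j) \<le> z j"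
    unfolding u_def d_def m_def using LB(3)[OF n2 xi b om s0 F] .
  have upper: "Gv n \<xi> \<beta> \<omega> s d' m' \<le> V" if A: "ach n \<xi> \<beta> d' m'" for d' m'
  proof -
    obtain p' \<delta>' x' y' z' r' where "feasible_P4 n \<xi> \<beta> p' \<delta>' x' y' z' r'"
        "obj_P4 n \<omega> s p' \<delta>' z' = Gv n \<xi> \<beta> \<omega> s d' m'"
      using construct[OF n2 xi b A, of \<omega> s] by blast
    then show ?thesis using optS unfolding V_def by metis
  qed
  have human: "Gv n \<xi> \<beta> \<omega> s d' m' \<le> optval_human n \<xi> \<beta> \<omega> s"
    if A: "ach n \<xi> \<beta> d' m'" and eq: "\<forall>j\<in>{1..n}. m' j = d' j" for d' m'
  proof -
    obtain p' \<delta>' x' y' z' r' where Fp: "feasible_P4 n \<xi> \<beta> p' \<delta>' x' y' z' r'"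
        and ob: "obj_P4 n \<omega> s p' \<delta>' z' = Gv n \<xi> \<beta> \<omega> s d' m'"
        and zf: "\<forall>i\<in>{1..n}. z' i = max (d' i - m' i) (inflow n \<xi> (\<lambda>j. d' j - m' j) i)"
      using construct[OF n2 xi b A, of \<omega> s] by blast
    have "\<forall>i\<in>{1..n}. z' i = 0"
    proof
      fix i assume i: "i \<in> {1..n}"
      have "inflow n \<xi> (\<lambda>j. d' j - m' j) i = 0"
        unfolding inflow_def using eq by (intro sum.neutral) auto
      then show "z' i = 0" using zf i eq by simp
    qed
    then show ?thesis using humle[OF Fp] ob by simp
  qed
  have GV: "Gv n \<xi> \<beta> \<omega> s d m = V" using VG upper[OF Am] by simp
  have Fm: "\<forall>j\<in>{1..n}. 0 \<le> m j \<and> m j \<le> d j \<and> d j \<le> 1" using Am unfolding ach_def by blast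
  have Add: "ach n \<xi> \<beta> d d" unfolding ach_def using Fm by force
  have noall: "\<not> (\<forall>j\<in>{1..n}. m j = d j)"
  proof
    assume "\<forall>j\<in>{1..n}. m j = d j"
    then have "Gv n \<xi> \<beta> \<omega> s d m \<le> optval_human n \<xi> \<beta> \<omega> s" using human[OF Am] by blast
    then show False using GV HV by simp
  qed
  have "0 \<le> z i" using bspec[OF F[unfolded feasible_P4_def] i(1)] by (elim conjE) assumption
  then have zi0: "z i = 0" using i(2) by simp
  have unn: "\<forall>j\<in>{1..n}. 0 \<le> u j" using Fm unfolding u_def by auto
  have inn: "0 \<le> inflow n \<xi> u i" using inflow_nonneg[OF n2 xi unn] .
  have mx: "max (u i) (inflow n \<xi> u i) \<le> 0" using bspec[OF zb i(1)] zi0 by simp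
  have "0 \<le> u i" using unn i(1) by blast
  then have ui: "u i = 0" and iui: "inflow n \<xi> u i = 0" using mx inn by simp_all
  have terms: "\<forall>j\<in>{1..n}. alpha n \<xi> j i * u j = 0"
  proof -
    have "\<forall>j\<in>{1..n}. 0 \<le> alpha n \<xi> j i * u j" using alpha_nonneg[OF n2 xi] unn by simp
    moreover have "(\<Sum>j\<in>{1..n}. alpha n \<xi> j i * u j) = 0" using iui unfolding inflow_def .
    ultimately show ?thesis using sum_nonneg_eq_0_iff[of "{1..n}" "\<lambda>j. alpha n \<xi> j i * u j"] by blast
  qed
  have Lp: "real n - 1 > 0" using n3 by simp
  show False
  proof (cases "0 < \<xi> \<or> i = 1")
    case True
    have "\<forall>j\<in>{1..n}. m j = d j"
    proof
      fix j assume j: "j \<in> {1..n}"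
      show "m j = d j"
      proof (cases "j = i")
        case True then show ?thesis using ui unfolding u_def by simp
      next
        case False
        have "0 < alpha n \<xi> j i"
        proof -
          have c1: "0 < \<xi> / (real n - 1) + (1 - \<xi>)"
          proof (cases "\<xi> < 1")
            case True then show ?thesis using xi Lp by (simp add: add_nonneg_pos)
          next
            case False then have "\<xi> = 1" using xi by simp
            then show ?thesis using Lp by simp
          qed
          show ?thesis using \<open>0 < \<xi> \<or> i = 1\<close> False Lp c1 unfolding alpha_def by auto
        qed
        then have "u j = 0" using bspec[OF terms j] by simp
        then show ?thesis unfolding u_def by simp
      qed
    qed
    then show False using noall by simp
  next
    case False
    then have xi0: "\<xi> = 0" and i1: "i \<noteq> 1" using xi by auto
    have "0 < alpha n \<xi> 1 i" using i1 Lp unfolding alpha_def by simp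
    moreover have "(1::nat) \<in> {1..n}" using n2 by simp
    then have "alpha n \<xi> 1 i * u 1 = 0" using terms by blast
    ultimately have "u 1 = 0" by simp
    then have hub: "m 1 = d 1" unfolding u_def by simp
    have J: "\<exists>j\<in>{2..n}. m j < d j"
    proof -
      obtain j where j: "j \<in> {1..n}" "m j \<noteq> d j" using noall by blast
      then have "j \<noteq> 1" using hub by auto
      then show ?thesis using j Fm by (intro bexI[of _ j]) force+
    qed
    have Am0: "ach n 0 \<beta> d m" using Am xi0 by simp
    have lv: "\<forall>l\<in>{2..n}. m l \<le> d l" using Fm by auto
    show False
    proof (cases "\<omega> * (1 - \<beta>) * (1 + \<beta>) \<le> 2 * s")
      case True
      have "Gv n 0 \<beta> \<omega> s d m \<le> Gv n 0 \<beta> \<omega> s d d" using big2s[OF n2 b om True hub lv] .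
      moreover have "Gv n \<xi> \<beta> \<omega> s d d \<le> optval_human n \<xi> \<beta> \<omega> s" using human[OF Add] by simp
      ultimately show False using GV HV xi0 by simp
    next
      case False
      then have s2: "2 * s < \<omega> * (1 - \<beta>) * (1 + \<beta>)" by simp
      have kp: "0 < \<omega> * (1 - \<beta>)" using om b by simp
      have "\<omega> * (1 - \<beta>) * (1 + \<beta>) < \<omega> * (1 - \<beta>) * 2"
        using b(2) kp by (intro mult_strict_left_mono) auto
      then have sk: "s < \<omega> * (1 - \<beta>)" using s2 by simp
      have opt0: "\<And>d' m'. ach n 0 \<beta> d' m' \<Longrightarrow> Gv n 0 \<beta> \<omega> s d' m' \<le> Gv n 0 \<beta> \<omega> s d m"
        using upper GV xi0 by simp
      show False using star_contra[OF n3 b om s0 sk s2 Am0 opt0 hub J] .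
    qed
  qed
qed

end
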